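(* The elements $\mathbf{V}_M$, where $M$ are connected $k$-packed matrices, form a basis of the vector space of primitive elements of $\mathbf{PM}_k$.
   Context: Let $k \geq 1$, $A_k := \{0,1,\dots,k\}$. A $k$-packed matrix of size $n$ is an $n\times n$ matrix with entries in $A_k$ with at least one nonzero entry in each row and column. $\mathbf{PM}_k$ is the Hopf algebra with fundamental basis $(\mathbf{F}_M)$ indexed by $k$-packed matrices, with product $\mathbf{F}_{M_1}\cdot\mathbf{F}_{M_2} = \sum_{M \in \mathrm{Sh}_c(M_1,M_2)} \mathbf{F}_M$ (for sizes $n_1,n_2$, $\mathrm{Sh}_c(M_1,M_2)$ is the set of all matrices obtained by shuffling the columns of $M_1$ with an $n_2 \times n_1$ zero block placed below it, with the columns of $M_2$ with an $n_1\times n_2$ zero block placed above it) and coproduct $\Delta(\mathbf{F}_M) = \sum_{M = [M_1|M_2]} \mathbf{F}_{\operatorname{cp}(M_1)} \otimes \mathbf{F}_{\operatorname{cp}(M_2)}$ (sum over splittings into left and right column blocks with square compressions, $\operatorname{cp}$ deleting null rows and columns). $\mathbf{PM}_k^\star$ is its dual with adjoint basis $(\mathbf{F}^\star_M)$, whose product is $\mathbf{F}^\star_{M_1}\cdot\mathbf{F}^\star_{M_2} = \sum \mathbf{F}^\star_M$ over all $M$ obtained by shuffling the rows of $[M_1 \mid 0_{n_1\times n_2}]$ with the rows of $[0_{n_2\times n_1} \mid M_2]$. Let $\mathrm{ov}(M_1,M_2) := \begin{pmatrix} M_1 & 0 \\ 0 & M_2 \end{pmatrix}$. A $k$-packed matrix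 $M \neq \emptyset$ is connected if $M = \mathrm{ov}(M_1,M_2)$ implies $M_1 = M$ or $M_2 = M$; every $k$-packed matrix factors uniquely as $M = \mathrm{ov}(M_1, \mathrm{ov}(M_2, \dots))$ with connected $M_1,\dots,M_r$. Set $\mathbf{W}^M := \mathbf{F}^\star_{M_1} \cdot \ldots \cdot \mathbf{F}^\star_{M_r}$ for this factorization; the $\mathbf{W}^M$ form a basis of $\mathbf{PM}_k^\star$, and $\mathbf{V}_M$ denotes the elements of $\mathbf{PM}_k$ forming the basis adjoint to $(\mathbf{W}^M)$. *)

theory Defs
  imports Main "HOL.Modules" "HOL-Library.Function_Algebras"
begin

text \<open>A matrix is a list of rows.\<close>

type_synonym mat = "nat list list"

definition is_square :: "mat \<Rightarrow> bool" where
  "is_square M \<longleftrightarrow> (\<forall>r\<in>set M. length r = length M)"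

definition packed :: "nat \<Rightarrow> mat \<Rightarrow> bool" where
  "packed k M \<longleftrightarrow> is_square M
     \<and> (\<forall>r\<in>set M. (\<forall>x\<in>set r. x \<le> k) \<and> (\<exists>x\<in>set r. x \<noteq> 0))
     \<and> (\<forall>j<length M. \<exists>r\<in>set M. r ! j \<noteq> 0)"

text \<open>Compression: delete null rows and null columns.\<close>
definition cp :: "mat \<Rightarrow> mat" where
  "cp X = map (\<lambda>r. nths r {j. \<exists>r'\<in>set X. j < length r' \<and> r' ! j \<noteq> 0})
             (filter (\<lambda>r. \<exists>x\<in>set r. x \<noteq> 0) X)"

text \<open>Elements of PM_k (and of its graded dual): finitely supported coefficient
  functions on k-packed matrices, over a field.\<close>
definition PMk :: "nat \<Rightarrow> (mat \<Rightarrow> 'a::field) set" where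
  "PMk k = {x. finite {M. x M \<noteq> 0} \<and> (\<forall>M. x M \<noteq> 0 \<longrightarrow> packed k M)}"

definition scl :: "'a::field \<Rightarrow> (mat \<Rightarrow> 'a) \<Rightarrow> (mat \<Rightarrow> 'a)" where
  "scl c x = (\<lambda>M. c * x M)"

text \<open>Basis element F_M (resp. F*_M) as a coefficient function.\<close>
definition basis_elt :: "mat \<Rightarrow> mat \<Rightarrow> 'a::field" where
  "basis_elt M = (\<lambda>N. if N = M then 1 else 0)"

definition unit_elt :: "mat \<Rightarrow> 'a::field" where
  "unit_elt = basis_elt []"

text \<open>Coproduct: coefficient of F_A (x) F_B in Delta(F_M): number of column
  splittings M = [M1|M2] (after j columns) with square compressions
  cp M1 = A, cp M2 = B.\<close>
definition dcoef :: "mat \<Rightarrow> mat \<Rightarrow> mat \<Rightarrow> nat" where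
  "dcoef M A B = card {j. j \<le> length M \<and>
       is_square (cp (map (take j) M)) \<and> is_square (cp (map (drop j) M)) \<and>
       cp (map (take j) M) = A \<and> cp (map (drop j) M) = B}"

text \<open>Elements of PM_k (x) PM_k as coefficient functions on pairs.\<close>
definition coprod :: "(mat \<Rightarrow> 'a::field) \<Rightarrow> (mat \<times> mat \<Rightarrow> 'a)" where
  "coprod x = (\<lambda>(A, B). \<Sum>M\<in>{M. x M \<noteq> 0}. x M * of_nat (dcoef M A B))"

definition tens :: "(mat \<Rightarrow> 'a::field) \<Rightarrow> (mat \<Rightarrow> 'a) \<Rightarrow> (mat \<times> mat \<Rightarrow> 'a)" where
  "tens x y = (\<lambda>(A, B). x A * y B)"

definition prim :: "nat \<Rightarrow> (mat \<Rightarrow> 'a::field) set" where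
  "prim k = {x \<in> PMk k. coprod x = tens x unit_elt + tens unit_elt x}"

definition pad_right :: "mat \<Rightarrow> nat \<Rightarrow> mat" where
  "pad_right M n = map (\<lambda>r. r @ replicate n 0) M"

definition pad_left :: "nat \<Rightarrow> mat \<Rightarrow> mat" where
  "pad_left n M = map (\<lambda>r. replicate n 0 @ r) M"

definition row_shuffles :: "mat \<Rightarrow> mat \<Rightarrow> mat set" where
  "row_shuffles M1 M2 = shuffles (pad_right M1 (length M2)) (pad_left (length M1) M2)"

text \<open>Product of PM_k^*, bilinear extension of F*_M1 . F*_M2 = sum of F*_M over
  the row shuffles.\<close>
definition dprod :: "(mat \<Rightarrow> 'a::field) \<Rightarrow> (mat \<Rightarrow> 'a) \<Rightarrow> (mat \<Rightarrow> 'a)" where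
  "dprod a b = (\<lambda>N. \<Sum>p\<in>{p. a (fst p) \<noteq> 0 \<and> b (snd p) \<noteq> 0}.
       a (fst p) * b (snd p) * (if N \<in> row_shuffles (fst p) (snd p) then 1 else 0))"

definition ov :: "mat \<Rightarrow> mat \<Rightarrow> mat" where
  "ov M1 M2 = pad_right M1 (length M2) @ pad_left (length M1) M2"

definition connected :: "nat \<Rightarrow> mat \<Rightarrow> bool" where
  "connected k M \<longleftrightarrow> packed k M \<and> M \<noteq> [] \<and>
     (\<forall>M1 M2. packed k M1 \<longrightarrow> packed k M2 \<longrightarrow> M = ov M1 M2 \<longrightarrow> M1 = M \<or> M2 = M)"

text \<open>Factorisation M = ov(M1, ov(M2, ...)) into connected matrices (unique).\<close>
definition factors :: "nat \<Rightarrow> mat \<Rightarrow> mat list" where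
  "factors k M = (SOME Ms. (\<forall>X\<in>set Ms. connected k X) \<and> foldr ov Ms [] = M)"

definition W :: "nat \<Rightarrow> mat \<Rightarrow> mat \<Rightarrow> 'a::field" where
  "W k M = foldr dprod (map basis_elt (factors k M)) unit_elt"

definition pairing :: "(mat \<Rightarrow> 'a::field) \<Rightarrow> (mat \<Rightarrow> 'a) \<Rightarrow> 'a" where
  "pairing w v = (\<Sum>N\<in>{N. v N \<noteq> 0}. w N * v N)"

definition V :: "nat \<Rightarrow> mat \<Rightarrow> mat \<Rightarrow> 'a::field" where
  "V k M = (THE v. v \<in> PMk k \<and>
       (\<forall>M'. packed k M' \<longrightarrow> pairing (W k M') v = (if M' = M then 1 else 0)))"

end

theory Submission
  imports Defs "HOL-Library.List_Lexorder"
begin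

lemma sum_fun_apply: "(sum f A) x = sum (\<lambda>i. f i x) A"
  by (induction A rule: infinite_finite_induct) auto

lemma map_shuffles: "map f ` shuffles xs ys = shuffles (map f xs) (map f ys)"
  by (induction xs ys rule: shuffles.induct) (auto simp: image_Un image_image)

lemma in_shuffles_map: "zs \<in> shuffles xs ys \<Longrightarrow> map f zs \<in> shuffles (map f xs) (map f ys)"
  using map_shuffles by blast

lemma shuffles_filter_char:
  assumes "\<forall>x\<in>set xs. P x" "\<forall>y\<in>set ys. \<not> P y"
  shows "ws \<in> shuffles xs ys \<longleftrightarrow> filter P ws = xs \<and> filter (\<lambda>w. \<not> P w) ws = ys"
proof
  assume h: "ws \<in> shuffles xs ys"
  have "filter P ws \<in> shuffles (filter P xs) (filter P ys)"
    using filter_shuffles[of P xs ys] h by blast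
  moreover have "filter P xs = xs" "filter P ys = []" using assms by auto
  ultimately have 1: "filter P ws = xs" by simp
  have "filter (\<lambda>w. \<not> P w) ws \<in> shuffles (filter (\<lambda>w. \<not> P w) xs) (filter (\<lambda>w. \<not> P w) ys)"
    using filter_shuffles[of "\<lambda>w. \<not> P w" xs ys] h by blast
  moreover have "filter (\<lambda>w. \<not> P w) xs = []" "filter (\<lambda>w. \<not> P w) ys = ys" using assms by auto
  ultimately have 2: "filter (\<lambda>w. \<not> P w) ws = ys" by simp
  show "filter P ws = xs \<and> filter (\<lambda>w. \<not> P w) ws = ys" using 1 2 by simp
next
  assume "filter P ws = xs \<and> filter (\<lambda>w. \<not> P w) ws = ys"
  then show "ws \<in> shuffles xs ys" using partition_in_shuffles[of ws P] by simp
qed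

lemma append_in_shuffles: "xs @ ys \<in> shuffles xs ys"
  by (induction xs) (auto intro: Cons_in_shuffles_leftI)

lemma append_le_mono: "(ys::'a::linorder list) \<le> zs \<Longrightarrow> xs @ ys \<le> xs @ zs"
  by (induction xs) auto

lemma map_less_mono:
  fixes f :: "'a::linorder \<Rightarrow> 'b::linorder"
  assumes "\<And>u v. u < v \<Longrightarrow> f u < f v"
  shows "xs < ys \<Longrightarrow> map f xs < map f ys"
proof (induction xs arbitrary: ys)
  case Nil then show ?case by (cases ys) auto
next
  case (Cons x xs)
  then obtain y ys' where ys: "ys = y # ys'" by (cases ys) auto
  from Cons.prems ys have "x < y \<or> x = y \<and> xs < ys'" by auto
  then show ?case using Cons.IH assms ys by auto
qed

lemma map_le_mono:
  fixes f :: "'a::linorder \<Rightarrow> 'b::linorder"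
  assumes "\<And>u v. u < v \<Longrightarrow> f u < f v"
  shows "xs \<le> ys \<Longrightarrow> map f xs \<le> map f ys"
  using map_less_mono[of f xs ys] assms by (auto simp: order_le_less)

lemma shuffle_le_append:
  fixes xs ys :: "'a::linorder list"
  assumes "\<forall>x\<in>set xs. \<forall>y\<in>set ys. y < x" "zs \<in> shuffles xs ys"
  shows "zs \<le> xs @ ys"
  using assms
proof (induction xs ys arbitrary: zs rule: shuffles.induct)
  case (1 ys) then show ?case by simp
next
  case (2 xs) then show ?case by simp
next
  case (3 x xs y ys)
  from "3.prems"(2) consider (a) zs' where "zs = x # zs'" "zs' \<in> shuffles xs (y # ys)"
    | (b) zs' where "zs = y # zs'" "zs' \<in> shuffles (x # xs) ys" by auto
  then show ?case
  proof cases
    case a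
    then have "zs' \<le> xs @ y # ys" using "3.IH"(1) "3.prems"(1) by auto
    then show ?thesis using a by simp
  next
    case b
    have "y < x" using "3.prems"(1) by auto
    then show ?thesis using b by simp
  qed
qed

lemma zeros_less_row:
  fixes u :: "nat list"
  assumes "\<exists>x\<in>set u. x \<noteq> 0"
  shows "replicate (length u) 0 @ w < u @ zs"
  using assms
proof (induction u)
  case Nil then show ?case by simp
next
  case (Cons x u)
  show ?case
  proof (cases "x = 0")
    case True
    then have "\<exists>x\<in>set u. x \<noteq> 0" using Cons.prems by auto
    then show ?thesis using Cons.IH True by simp
  next
    case False then show ?thesis by simp
  qed
qed

lemma prepend_less_mono: "(u::nat list) < v \<Longrightarrow> zs @ u < zs @ v"
  by (induction zs) auto

definition nzr :: "nat list \<Rightarrow> bool" where "nzr r \<longleftrightarrow> (\<exists>x\<in>set r. x \<noteq> 0)"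
definition Ql :: "nat \<Rightarrow> nat list \<Rightarrow> bool" where "Ql n r \<longleftrightarrow> nzr (take n r)"
definition PS :: "nat \<Rightarrow> nat \<Rightarrow> mat set" where "PS k n = {M. packed k M \<and> length M = n}"
definition supp :: "(mat \<Rightarrow> 'a::zero) \<Rightarrow> mat set" where "supp x = {M. x M \<noteq> 0}"

lemma length_pad_right[simp]: "length (pad_right M n) = length M"
  by (simp add: pad_right_def)
lemma length_pad_left[simp]: "length (pad_left n M) = length M"
  by (simp add: pad_left_def)
lemma length_ov[simp]: "length (ov A B) = length A + length B"
  by (simp add: ov_def)
lemma ov_Nil_right[simp]: "ov A [] = A"
  by (simp add: ov_def pad_right_def pad_left_def)
lemma ov_Nil_left[simp]: "ov [] B = B"
  by (simp add: ov_def pad_right_def pad_left_def)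
lemma pad_left_0[simp]: "pad_left 0 B = B" by (simp add: pad_left_def)
lemma pad_right_0[simp]: "pad_right A 0 = A" by (simp add: pad_right_def)

lemma ov_assoc: "ov (ov A B) C = ov A (ov B C)"
  by (simp add: ov_def pad_right_def pad_left_def replicate_add)

lemma packed_Nil[simp]: "packed k []"
  by (simp add: packed_def is_square_def)

lemma packedD:
  assumes "packed k M"
  shows "\<And>r. r \<in> set M \<Longrightarrow> length r = length M"
    "\<And>r x. r \<in> set M \<Longrightarrow> x \<in> set r \<Longrightarrow> x \<le> k"
    "\<And>r. r \<in> set M \<Longrightarrow> nzr r"
    "\<And>j. j < length M \<Longrightarrow> \<exists>r\<in>set M. r ! j \<noteq> 0"
  using assms by (auto simp: packed_def is_square_def nzr_def)

lemma packedI: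
  assumes "\<And>r. r \<in> set M \<Longrightarrow> length r = length M"
    "\<And>r x. r \<in> set M \<Longrightarrow> x \<in> set r \<Longrightarrow> x \<le> k"
    "\<And>r. r \<in> set M \<Longrightarrow> nzr r"
    "\<And>j. j < length M \<Longrightarrow> \<exists>r\<in>set M. r ! j \<noteq> 0"
  shows "packed k M"
  using assms by (auto simp: packed_def is_square_def nzr_def)

lemma nzr_append[simp]: "nzr (u @ v) \<longleftrightarrow> nzr u \<or> nzr v"
  by (auto simp: nzr_def)
lemma nzr_replicate[simp]: "\<not> nzr (replicate n 0)"
  by (auto simp: nzr_def)

lemma set_pad_right: "set (pad_right M n) = (\<lambda>r. r @ replicate n 0) ` set M"
  by (simp add: pad_right_def)
lemma set_pad_left: "set (pad_left n M) = (\<lambda>r. replicate n 0 @ r) ` set M"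
  by (simp add: pad_left_def)

lemma packed_shuffle:
  assumes A: "packed k A" and B: "packed k B"
    and N: "N \<in> shuffles (pad_right A (length B)) (pad_left (length A) B)"
  shows "packed k N" "length N = length A + length B"
proof -
  have sN: "set N = set (pad_right A (length B)) \<union> set (pad_left (length A) B)"
    using set_shuffles[OF N] .
  have lN: "length N = length A + length B" using length_shuffles[OF N] by simp
  show "length N = length A + length B" by (rule lN)
  show "packed k N"
  proof (rule packedI)
    fix r assume "r \<in> set N"
    then show "length r = length N" using sN lN packedD(1)[OF A] packedD(1)[OF B]
      by (auto simp: set_pad_right set_pad_left)
  next
    fix r x assume "r \<in> set N" "x \<in> set r"
    then show "x \<le> k" using sN packedD(2)[OF A] packedD(2)[OF B]
      by (auto simp: set_pad_right set_pad_left)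
  next
    fix r assume "r \<in> set N"
    then show "nzr r" using sN packedD(3)[OF A] packedD(3)[OF B]
      by (auto simp: set_pad_right set_pad_left)
  next
    fix j assume j: "j < length N"
    show "\<exists>r\<in>set N. r ! j \<noteq> 0"
    proof (cases "j < length A")
      case True
      then obtain r where r: "r \<in> set A" "r ! j \<noteq> 0" using packedD(4)[OF A] by blast
      have "length r = length A" using packedD(1)[OF A r(1)] .
      then have "(r @ replicate (length B) 0) ! j \<noteq> 0" using True r by (simp add: nth_append)
      then show ?thesis using r sN by (auto simp: set_pad_right)
    next
      case False
      then have "j - length A < length B" using j lN by simp
      then obtain r where r: "r \<in> set B" "r ! (j - length A) \<noteq> 0" using packedD(4)[OF B] by blast
      then have "(replicate (length A) 0 @ r) ! j \<noteq> 0" using False by (simp add: nth_append)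
      then show ?thesis using r sN by (auto simp: set_pad_left)
    qed
  qed
qed

lemma ov_in_rs: "ov A B \<in> row_shuffles A B"
  by (simp add: ov_def row_shuffles_def append_in_shuffles)

lemma packed_ov: "packed k A \<Longrightarrow> packed k B \<Longrightarrow> packed k (ov A B)"
  using packed_shuffle ov_in_rs unfolding row_shuffles_def by blast

lemma rs_PS: "packed k A \<Longrightarrow> packed k B \<Longrightarrow> N \<in> row_shuffles A B \<Longrightarrow> N \<in> PS k (length A + length B)"
  using packed_shuffle unfolding row_shuffles_def PS_def by blast

lemma Ql_pad_right: "packed k A \<Longrightarrow> r \<in> set (pad_right A m) \<Longrightarrow> Ql (length A) r"
  using packedD(1,3) by (auto simp: set_pad_right Ql_def)

lemma not_Ql_pad_left: "r \<in> set (pad_left a B) \<Longrightarrow> \<not> Ql a r"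
  by (auto simp: set_pad_left Ql_def)

lemma rs_char:
  assumes "packed k A"
  shows "N \<in> row_shuffles A B \<longleftrightarrow>
    filter (Ql (length A)) N = pad_right A (length B) \<and>
    filter (\<lambda>r. \<not> Ql (length A) r) N = pad_left (length A) B"
  unfolding row_shuffles_def
  by (rule shuffles_filter_char) (use Ql_pad_right[OF assms] not_Ql_pad_left in blast)+

lemma rs_Nil_left[simp]: "row_shuffles [] B = {B}"
  by (simp add: row_shuffles_def pad_right_def)
lemma rs_Nil_right[simp]: "row_shuffles A [] = {A}"
  by (simp add: row_shuffles_def pad_left_def)

lemma finite_rs[simp]: "finite (row_shuffles A B)"
  by (simp add: row_shuffles_def)

lemma finite_PS: "finite (PS k n)"
proof -
  let ?R = "{r. set r \<subseteq> {0..k} \<and> length r = n}"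
  have fR: "finite ?R" by (rule finite_lists_length_eq) simp
  have "PS k n \<subseteq> {M. set M \<subseteq> ?R \<and> length M = n}"
    by (auto simp: PS_def packed_def is_square_def)
  moreover have "finite {M. set M \<subseteq> ?R \<and> length M = n}"
    by (rule finite_lists_length_eq[OF fR])
  ultimately show ?thesis by (rule finite_subset)
qed

lemma pad_left_inj: "pad_left a B = pad_left a C \<Longrightarrow> B = C"
proof -
  have "inj (\<lambda>r::nat list. replicate a 0 @ r)" by (rule injI) simp
  then show "pad_left a B = pad_left a C \<Longrightarrow> B = C" unfolding pad_left_def by (simp add: inj_map_eq_map)
qed

lemma pad_right_inj: "pad_right B c = pad_right C c \<Longrightarrow> B = C"
proof -
  have "inj (\<lambda>r::nat list. r @ replicate c 0)" by (rule injI) simp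
  then show "pad_right B c = pad_right C c \<Longrightarrow> B = C" unfolding pad_right_def by (simp add: inj_map_eq_map)
qed

lemma filter_notQl_ov:
  assumes "packed k A"
  shows "filter (\<lambda>r. \<not> Ql (length A) r) (ov A R) = pad_left (length A) R"
proof -
  have "filter (\<lambda>r. \<not> Ql (length A) r) (pad_right A (length R)) = []"
    using Ql_pad_right[OF assms] by (auto simp: filter_empty_conv)
  moreover have "filter (\<lambda>r. \<not> Ql (length A) r) (pad_left (length A) R) = pad_left (length A) R"
    using not_Ql_pad_left[of _ "length A" R] by (auto simp: filter_id_conv)
  ultimately show ?thesis by (simp add: ov_def)
qed

lemma ov_rs_iff:
  assumes "packed k A"
  shows "ov A R \<in> row_shuffles A B \<longleftrightarrow> B = R"
proof
  assume "ov A R \<in> row_shuffles A B"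
  then have "filter (\<lambda>r. \<not> Ql (length A) r) (ov A R) = pad_left (length A) B"
    using rs_char[OF assms] by blast
  then show "B = R" using filter_notQl_ov[OF assms, of R] pad_left_inj by metis
qed (simp add: ov_in_rs)

definition splitp :: "mat \<Rightarrow> nat \<Rightarrow> bool" where
  "splitp M s \<longleftrightarrow> (\<forall>i<length M. \<forall>j<length M. M!i!j \<noteq> 0 \<longrightarrow> (i < s \<longleftrightarrow> j < s))"

lemma nth_ov_top: "i < length A \<Longrightarrow> ov A R ! i = A!i @ replicate (length R) 0"
  by (simp add: ov_def pad_right_def nth_append)
lemma nth_ov_bot: "length A \<le> i \<Longrightarrow> i < length A + length R \<Longrightarrow> ov A R ! i = replicate (length A) 0 @ R!(i - length A)"
  by (simp add: ov_def pad_left_def nth_append)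

lemma splitp_ov:
  assumes A: "packed k A" and R: "packed k R"
  shows "splitp (ov A R) (length A)"
  unfolding splitp_def
proof (intro allI impI)
  fix i j assume i: "i < length (ov A R)" and j: "j < length (ov A R)" and nz: "ov A R ! i ! j \<noteq> 0"
  show "i < length A \<longleftrightarrow> j < length A"
  proof (cases "i < length A")
    case True
    then have "length (A!i) = length A" using packedD(1)[OF A] by auto
    then show ?thesis using nz True nth_ov_top[OF True, of R] j by (auto simp: nth_append split: if_splits)
  next
    case False
    then show ?thesis using nz nth_ov_bot[of A i R] i by (auto simp: nth_append split: if_splits)
  qed
qed

lemma zero_list_eq: "(\<forall>j<length u. u!j = (0::nat)) \<Longrightarrow> u = replicate (length u) 0"
  by (simp add: list_eq_iff_nth_eq)

lemma nzr_nth: "nzr u \<longleftrightarrow> (\<exists>j<length u. u!j \<noteq> 0)"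
  unfolding nzr_def by (metis in_set_conv_nth)

lemma splitp_decomp:
  assumes M: "packed k M" and sp: "splitp M s" and s: "s \<le> length M"
  shows "\<exists>A R. packed k A \<and> packed k R \<and> length A = s \<and> M = ov A R"
proof -
  let ?n = "length M"
  define A where "A = map (take s) (take s M)"
  define R where "R = map (drop s) (drop s M)"
  have lA: "length A = s" using s by (simp add: A_def)
  have lR: "length R = ?n - s" by (simp add: R_def)
  have rowlen: "\<And>i. i < ?n \<Longrightarrow> length (M!i) = ?n" using packedD(1)[OF M] by auto
  have top0: "\<And>i j. i < s \<Longrightarrow> s \<le> j \<Longrightarrow> j < ?n \<Longrightarrow> M!i!j = 0"
    using sp s unfolding splitp_def by (metis less_le_trans not_le)
  have bot0: "\<And>i j. s \<le> i \<Longrightarrow> i < ?n \<Longrightarrow> j < s \<Longrightarrow> M!i!j = 0"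
    using sp s unfolding splitp_def by (metis less_le_trans not_le)
  have Ai: "\<And>i. i < s \<Longrightarrow> A!i = take s (M!i)" using s by (simp add: A_def)
  have Ri: "\<And>i. i < ?n - s \<Longrightarrow> R!i = drop s (M!(s+i))" by (simp add: R_def)
  have eq: "M = ov A R"
  proof (rule nth_equalityI)
    show "length M = length (ov A R)" using lA lR s by simp
  next
    fix i assume i: "i < length M"
    show "M!i = ov A R ! i"
    proof (cases "i < s")
      case True
      have "drop s (M!i) = replicate (?n - s) 0"
        using top0[OF True] rowlen[OF i] by (intro nth_equalityI) auto
      then have "M!i = take s (M!i) @ replicate (?n - s) 0" by (metis append_take_drop_id)
      then show ?thesis using nth_ov_top[of i A R] True lA lR Ai by simp
    next
      case False
      have "take s (M!i) = replicate s 0"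
        using bot0[OF _ i] False rowlen[OF i] s by (intro nth_equalityI) auto
      then have "M!i = replicate s 0 @ drop s (M!i)" by (metis append_take_drop_id)
      moreover have "R!(i - s) = drop s (M!i)" using Ri[of "i-s"] False i by simp
      ultimately show ?thesis using nth_ov_bot[of A i R] False i lA lR by simp
    qed
  qed
  have pA: "packed k A"
  proof (rule packedI)
    fix r assume "r \<in> set A"
    then obtain i where "i < s" "r = take s (M!i)" using Ai lA by (metis in_set_conv_nth)
    then show "length r = length A" using rowlen s lA by simp
  next
    fix r x assume "r \<in> set A" "x \<in> set r"
    then obtain i where i: "i < s" "r = take s (M!i)" using Ai lA by (metis in_set_conv_nth)
    then have "M!i \<in> set M" using s by simp
    then show "x \<le> k" using packedD(2)[OF M] \<open>x \<in> set r\<close> i by (meson in_set_takeD)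
  next
    fix r assume "r \<in> set A"
    then obtain i where i: "i < s" "r = take s (M!i)" using Ai lA by (metis in_set_conv_nth)
    have "nzr (M!i)" using packedD(3)[OF M] i s by simp
    then obtain j where j: "j < ?n" "M!i!j \<noteq> 0" using rowlen i s by (auto simp: nzr_nth)
    then have "j < s" using top0[OF i(1)] by (meson not_le)
    then show "nzr r" using i j rowlen s by (auto simp: nzr_nth)
  next
    fix j assume j: "j < length A"
    then obtain r where r: "r \<in> set M" "r!j \<noteq> 0" using packedD(4)[OF M] lA s by (meson less_le_trans)
    then obtain i where i: "i < ?n" "r = M!i" by (metis in_set_conv_nth)
    have "i < s" using bot0[of i j] i r j lA by (meson not_le)
    then have "A!i \<in> set A" using lA by simp
    moreover have "A!i!j \<noteq> 0" using Ai lA i r j \<open>i < s\<close> by auto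
    ultimately show "\<exists>r\<in>set A. r!j \<noteq> 0" by blast
  qed
  have pR: "packed k R"
  proof (rule packedI)
    fix r assume "r \<in> set R"
    then obtain i where "i < ?n - s" "r = drop s (M!(s+i))" using Ri lR by (metis in_set_conv_nth)
    then show "length r = length R" using rowlen lR by simp
  next
    fix r x assume "r \<in> set R" "x \<in> set r"
    then obtain i where i: "i < ?n - s" "r = drop s (M!(s+i))" using Ri lR by (metis in_set_conv_nth)
    then have "M!(s+i) \<in> set M" by simp
    then show "x \<le> k" using packedD(2)[OF M] \<open>x \<in> set r\<close> i by (meson in_set_dropD)
  next
    fix r assume "r \<in> set R"
    then obtain i where i: "i < ?n - s" "r = drop s (M!(s+i))" using Ri lR by (metis in_set_conv_nth)
    have "nzr (M!(s+i))" using packedD(3)[OF M] i by simp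
    then obtain j where j: "j < ?n" "M!(s+i)!j \<noteq> 0" using rowlen i by (auto simp: nzr_nth)
    then have "s \<le> j" by (cases "j < s") (use bot0[of "s+i" j] i in auto)
    then show "nzr r" using i j rowlen nzr_nth[of r]
      by (auto intro!: exI[of _ "j - s"])
  next
    fix j assume j: "j < length R"
    have "s + j < ?n" using j lR by simp
    then obtain r where r: "r \<in> set M" "r!(s+j) \<noteq> 0" using packedD(4)[OF M] by blast
    then obtain i where i: "i < ?n" "r = M!i" by (metis in_set_conv_nth)
    have "s \<le> i" by (cases "i < s") (use top0[of i "s+j"] i r j lR in auto)
    then have "R!(i-s) \<in> set R" using lR i by simp
    moreover have "R!(i-s)!j \<noteq> 0" using Ri[of "i-s"] lR i r j rowlen \<open>s \<le> i\<close> by auto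
    ultimately show "\<exists>r\<in>set R. r!j \<noteq> 0" by blast
  qed
  show ?thesis using pA pR lA eq by blast
qed

lemma connected_packed: "connected k M \<Longrightarrow> packed k M" by (simp add: connected_def)
lemma connected_nonempty: "connected k M \<Longrightarrow> M \<noteq> []" by (simp add: connected_def)

lemma no_inner_split:
  assumes A: "connected k A" and R: "packed k R" and sp: "splitp (ov A R) s"
    and s: "0 < s" "s < length A"
  shows False
proof -
  have pA: "packed k A" using A connected_packed by blast
  have "splitp A s"
    unfolding splitp_def
  proof (intro allI impI)
    fix i j assume i: "i < length A" and j: "j < length A" and nz: "A!i!j \<noteq> 0"
    have "length (A!i) = length A" using packedD(1)[OF pA] i by auto
    then have "ov A R ! i ! j = A!i!j" using nth_ov_top[OF i, of R] j by (simp add: nth_append)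
    then show "i < s \<longleftrightarrow> j < s" using sp i j nz unfolding splitp_def by auto
  qed
  then obtain A' R' where d: "packed k A'" "packed k R'" "length A' = s" "A = ov A' R'"
    using splitp_decomp[OF pA] s by fastforce
  then have "A' = A \<or> R' = A" using A unfolding connected_def by blast
  moreover have "length A = length A' + length R'" using d(4) by simp
  ultimately show False using d(3) s by auto
qed

lemma ov_proj:
  assumes "packed k A"
  shows "map (take (length A)) (take (length A) (ov A R)) = A"
    "map (drop (length A)) (drop (length A) (ov A R)) = R"
proof -
  have "map (take (length A)) (pad_right A (length R)) = A"
    using packedD(1)[OF assms] by (simp add: pad_right_def map_idI)
  then show "map (take (length A)) (take (length A) (ov A R)) = A" by (simp add: ov_def)
  show "map (drop (length A)) (drop (length A) (ov A R)) = R"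
    by (simp add: ov_def pad_left_def o_def)
qed

lemma ov_cancel:
  assumes A1: "connected k A1" and A2: "connected k A2" and R1: "packed k R1" and R2: "packed k R2"
    and eq: "ov A1 R1 = ov A2 R2"
  shows "A1 = A2 \<and> R1 = R2"
proof -
  have le: "\<And>A1 A2 R1 R2. connected k A1 \<Longrightarrow> connected k A2 \<Longrightarrow> packed k R1 \<Longrightarrow> packed k R2 \<Longrightarrow>
      ov A1 R1 = ov A2 R2 \<Longrightarrow> \<not> length A1 < length A2"
  proof
    fix A1 A2 R1 R2 assume c1: "connected k A1" and c2: "connected k A2" and p1: "packed k R1"
      and p2: "packed k R2" and e: "ov A1 R1 = ov A2 R2" and l: "length A1 < length A2"
    have "splitp (ov A2 R2) (length A1)" using splitp_ov[OF connected_packed[OF c1] p1] e by simp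
    moreover have "0 < length A1" using connected_nonempty[OF c1] by simp
    ultimately show False using no_inner_split[OF c2 p2] l by blast
  qed
  have l: "length A1 = length A2" using le[OF A1 A2 R1 R2 eq] le[OF A2 A1 R2 R1 eq[symmetric]] by simp
  show ?thesis using ov_proj[OF connected_packed[OF A1], of R1] ov_proj[OF connected_packed[OF A2], of R2] eq l
    by metis
qed

lemma foldr_ov_gen: "foldr ov xs B = ov (foldr ov xs []) B"
  by (induction xs) (auto simp: ov_assoc)

lemma foldr_ov_append: "foldr ov (xs @ ys) [] = ov (foldr ov xs []) (foldr ov ys [])"
  using foldr_ov_gen[of xs "foldr ov ys []"] by simp

lemma foldr_ov_Cons_ne: "connected k A \<Longrightarrow> foldr ov (A # Ms) [] \<noteq> []"
proof
  assume "connected k A" "foldr ov (A # Ms) [] = []"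
  then have "length (ov A (foldr ov Ms [])) = 0" by simp
  then show False using connected_nonempty[OF \<open>connected k A\<close>] by simp
qed

lemma packed_foldr: "\<forall>X\<in>set Ms. packed k X \<Longrightarrow> packed k (foldr ov Ms [])"
  by (induction Ms) (auto intro: packed_ov)

lemma length_foldr_ov: "length (foldr ov Ms []) = sum_list (map length Ms)"
  by (induction Ms) auto

lemma factorization_exists:
  "packed k M \<Longrightarrow> \<exists>Ms. (\<forall>X\<in>set Ms. connected k X) \<and> foldr ov Ms [] = M"
proof (induction "length M" arbitrary: M rule: less_induct)
  case less
  show ?case
  proof (cases "M = []")
    case True then show ?thesis by (intro exI[of _ "[]"]) simp
  next
    case ne: False
    show ?thesis
    proof (cases "connected k M")
      case True then show ?thesis by (intro exI[of _ "[M]"]) simp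
    next
      case False
      then obtain M1 M2 where m: "packed k M1" "packed k M2" "M = ov M1 M2" "M1 \<noteq> M" "M2 \<noteq> M"
        using less.prems ne unfolding connected_def by blast
      have "M2 \<noteq> []" using m by auto
      moreover have "M1 \<noteq> []" using m by auto
      ultimately have "length M1 < length M" "length M2 < length M" using m(3) by auto
      then obtain Ms1 Ms2 where "\<forall>X\<in>set Ms1. connected k X" "foldr ov Ms1 [] = M1"
        "\<forall>X\<in>set Ms2. connected k X" "foldr ov Ms2 [] = M2"
        using less.hyps m(1,2) by meson
      then show ?thesis using m(3) foldr_ov_append[of Ms1 Ms2] by (intro exI[of _ "Ms1 @ Ms2"]) auto
    qed
  qed
qed

lemma factorization_unique:
  "\<forall>X\<in>set Ms1. connected k X \<Longrightarrow> \<forall>X\<in>set Ms2. connected k X \<Longrightarrow>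
   foldr ov Ms1 [] = foldr ov Ms2 [] \<Longrightarrow> Ms1 = Ms2"
proof (induction Ms1 arbitrary: Ms2)
  case Nil
  then show ?case
    by (cases Ms2) (auto dest: foldr_ov_Cons_ne[of k _ "tl Ms2"])
next
  case (Cons A Ms1)
  show ?case
  proof (cases Ms2)
    case Nil then show ?thesis using Cons.prems foldr_ov_Cons_ne[of k A Ms1] by auto
  next
    case (Cons B Ms2')
    have p1: "packed k (foldr ov Ms1 [])" "packed k (foldr ov Ms2' [])"
      using Cons.prems Cons by (auto intro!: packed_foldr intro: connected_packed)
    have "A = B \<and> foldr ov Ms1 [] = foldr ov Ms2' []"
    proof (rule ov_cancel[OF _ _ p1])
      show "connected k A" "connected k B" using Cons.prems \<open>Ms2 = B # Ms2'\<close> by auto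
      show "ov A (foldr ov Ms1 []) = ov B (foldr ov Ms2' [])" using Cons.prems \<open>Ms2 = B # Ms2'\<close> by auto
    qed
    then show ?thesis using Cons.IH[of Ms2'] Cons.prems Cons by auto
  qed
qed

lemma factors_props:
  assumes "packed k M"
  shows "\<forall>X\<in>set (factors k M). connected k X" "foldr ov (factors k M) [] = M"
proof -
  have "(\<forall>X\<in>set (factors k M). connected k X) \<and> foldr ov (factors k M) [] = M"
    unfolding factors_def using someI_ex[OF factorization_exists[OF assms]] .
  then show "\<forall>X\<in>set (factors k M). connected k X" "foldr ov (factors k M) [] = M" by auto
qed

lemma factors_eqI:
  "\<forall>X\<in>set Ms. connected k X \<Longrightarrow> factors k (foldr ov Ms []) = Ms"
  using factorization_unique factors_props packed_foldr connected_packed by metis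

lemma factors_ov:
  assumes "connected k A" "packed k N"
  shows "factors k (ov A N) = A # factors k N"
  using factors_eqI[of "A # factors k N" k] factors_props[OF assms(2)] assms(1) by simp

lemma factors_Nil: "factors k [] = []"
  using factors_eqI[of "[]" k] by simp

lemma factors_connected: "connected k M \<Longrightarrow> factors k M = [M]"
  using factors_eqI[of "[M]" k] by simp

lemma filter_eq_cong: "(\<And>x. x \<in> set ws \<Longrightarrow> P x = Q x) \<Longrightarrow> filter P ws = filter Q ws"
  by (rule filter_cong) auto

lemma assoc_set1:
  assumes x: "\<forall>x\<in>set xs. P1 x \<and> P2 x" and y: "\<forall>y\<in>set ys. \<not> P1 y \<and> P2 y"
    and z: "\<forall>z\<in>set zs. \<not> P1 z \<and> \<not> P2 z"
  shows "{us \<in> shuffles xs ys. ws \<in> shuffles us zs} =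
    (if filter P1 ws = xs \<and> filter (\<lambda>w. \<not> P1 w \<and> P2 w) ws = ys \<and> filter (\<lambda>w. \<not> P2 w) ws = zs
     then {filter P2 ws} else {})"
proof -
  have c1: "\<And>us. us \<in> shuffles xs ys \<longleftrightarrow> filter P1 us = xs \<and> filter (\<lambda>w. \<not> P1 w) us = ys"
    by (rule shuffles_filter_char) (use x y in auto)
  have c2: "\<And>us. us \<in> shuffles xs ys \<Longrightarrow> (ws \<in> shuffles us zs \<longleftrightarrow> filter P2 ws = us \<and> filter (\<lambda>w. \<not> P2 w) ws = zs)"
  proof -
    fix us assume "us \<in> shuffles xs ys"
    then have "\<forall>u\<in>set us. P2 u" using set_shuffles x y by blast
    then show "ws \<in> shuffles us zs \<longleftrightarrow> filter P2 ws = us \<and> filter (\<lambda>w. \<not> P2 w) ws = zs"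
      by (rule shuffles_filter_char) (use z in auto)
  qed
  show ?thesis
  proof (cases "filter (\<lambda>w. \<not> P2 w) ws = zs")
    case False then show ?thesis using c2 by auto
  next
    case True
    have imp: "\<And>w. w \<in> set ws \<Longrightarrow> P1 w \<Longrightarrow> P2 w"
    proof (rule ccontr)
      fix w assume "w \<in> set ws" "P1 w" "\<not> P2 w"
      then have "w \<in> set (filter (\<lambda>w. \<not> P2 w) ws)" by simp
      then show False using True z \<open>P1 w\<close> by auto
    qed
    have e1: "filter P1 (filter P2 ws) = filter P1 ws"
      by (simp add: filter_filter) (rule filter_eq_cong, use imp in auto)
    have e2: "filter (\<lambda>w. \<not> P1 w) (filter P2 ws) = filter (\<lambda>w. \<not> P1 w \<and> P2 w) ws"
      by (simp add: filter_filter) (rule filter_eq_cong, auto)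
    show ?thesis using True c1 c2 e1 e2 by auto
  qed
qed

lemma assoc_set2:
  assumes x: "\<forall>x\<in>set xs. P1 x \<and> P2 x" and y: "\<forall>y\<in>set ys. \<not> P1 y \<and> P2 y"
    and z: "\<forall>z\<in>set zs. \<not> P1 z \<and> \<not> P2 z"
  shows "{vs \<in> shuffles ys zs. ws \<in> shuffles xs vs} =
    (if filter P1 ws = xs \<and> filter (\<lambda>w. \<not> P1 w \<and> P2 w) ws = ys \<and> filter (\<lambda>w. \<not> P2 w) ws = zs
     then {filter (\<lambda>w. \<not> P1 w) ws} else {})"
proof -
  have c1: "\<And>vs. vs \<in> shuffles ys zs \<longleftrightarrow> filter P2 vs = ys \<and> filter (\<lambda>w. \<not> P2 w) vs = zs"
    by (rule shuffles_filter_char) (use y z in auto)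
  have c2: "\<And>vs. vs \<in> shuffles ys zs \<Longrightarrow> (ws \<in> shuffles xs vs \<longleftrightarrow> filter P1 ws = xs \<and> filter (\<lambda>w. \<not> P1 w) ws = vs)"
  proof -
    fix vs assume "vs \<in> shuffles ys zs"
    then have "\<forall>u\<in>set vs. \<not> P1 u" using set_shuffles y z by blast
    then show "ws \<in> shuffles xs vs \<longleftrightarrow> filter P1 ws = xs \<and> filter (\<lambda>w. \<not> P1 w) ws = vs"
      by (rule shuffles_filter_char[rotated]) (use x in auto)
  qed
  show ?thesis
  proof (cases "filter P1 ws = xs")
    case False then show ?thesis using c2 by auto
  next
    case True
    have imp: "\<And>w. w \<in> set ws \<Longrightarrow> P1 w \<Longrightarrow> P2 w"
    proof -
      fix w assume "w \<in> set ws" "P1 w"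
      then have "w \<in> set (filter P1 ws)" by simp
      then show "P2 w" using True x by auto
    qed
    have e1: "filter P2 (filter (\<lambda>w. \<not> P1 w) ws) = filter (\<lambda>w. \<not> P1 w \<and> P2 w) ws"
      by (simp add: filter_filter)
    have e2: "filter (\<lambda>w. \<not> P2 w) (filter (\<lambda>w. \<not> P1 w) ws) = filter (\<lambda>w. \<not> P2 w) ws"
      by (simp add: filter_filter) (rule filter_eq_cong, use imp in auto)
    show ?thesis using True c1 c2 e1 e2 by auto
  qed
qed

lemma card_map_image: "card (map f ` S) = card S" if "inj f"
  using that by (intro card_image) (simp add: inj_on_def inj_map_eq_map)

lemma image_filter_set: "(\<And>X. X \<in> R \<Longrightarrow> P X \<longleftrightarrow> Q (f X)) \<Longrightarrow> f ` {X \<in> R. P X} = {u \<in> f ` R. Q u}"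
  by auto

lemma rs_assoc_count:
  assumes A: "packed k A" and B: "packed k B" and C: "packed k C"
  shows "card {X \<in> row_shuffles A B. N \<in> row_shuffles X C} = card {Y \<in> row_shuffles B C. N \<in> row_shuffles A Y}"
proof -
  let ?a = "length A" and ?b = "length B" and ?c = "length C"
  define f where "f = (\<lambda>r::nat list. r @ replicate ?c 0)"
  define g where "g = (\<lambda>r::nat list. replicate ?a 0 @ r)"
  define xs where "xs = pad_right A (?b + ?c)"
  define ys where "ys = map (\<lambda>r. replicate ?a 0 @ r @ replicate ?c 0) B"
  define zs where "zs = pad_left (?a + ?b) C"
  have injf: "inj f" unfolding f_def by (rule injI) simp
  have injg: "inj g" unfolding g_def by (rule injI) simp
  have lenX: "\<And>X. X \<in> row_shuffles A B \<Longrightarrow> length X = ?a + ?b"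
    unfolding row_shuffles_def using length_shuffles by fastforce
  have lenY: "\<And>Y. Y \<in> row_shuffles B C \<Longrightarrow> length Y = ?b + ?c"
    unfolding row_shuffles_def using length_shuffles by fastforce
  have mfp: "map f (pad_right A ?b) = xs" by (simp add: f_def xs_def pad_right_def replicate_add)
  have mfq: "map f (pad_left ?a B) = ys" by (simp add: f_def ys_def pad_left_def)
  have mgp: "map g (pad_right B ?c) = ys" by (simp add: g_def ys_def pad_right_def)
  have mgq: "map g (pad_left ?b C) = zs" by (simp add: g_def zs_def pad_left_def replicate_add)
  have S1: "map f ` {X \<in> row_shuffles A B. N \<in> row_shuffles X C} = {us \<in> shuffles xs ys. N \<in> shuffles us zs}"
  proof -
    have e: "map f ` row_shuffles A B = shuffles xs ys"
      unfolding row_shuffles_def map_shuffles mfp mfq ..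
    have "\<And>X. X \<in> row_shuffles A B \<Longrightarrow> N \<in> row_shuffles X C \<longleftrightarrow> N \<in> shuffles (map f X) zs"
    proof -
      fix X assume "X \<in> row_shuffles A B"
      then have "pad_left (length X) C = zs" using lenX zs_def by simp
      moreover have "pad_right X ?c = map f X" by (simp add: pad_right_def f_def)
      ultimately show "N \<in> row_shuffles X C \<longleftrightarrow> N \<in> shuffles (map f X) zs"
        unfolding row_shuffles_def by simp
    qed
    then have "map f ` {X \<in> row_shuffles A B. N \<in> row_shuffles X C} = {u \<in> map f ` row_shuffles A B. N \<in> shuffles u zs}"
      by (rule image_filter_set)
    then show ?thesis unfolding e .
  qed
  have S2: "map g ` {Y \<in> row_shuffles B C. N \<in> row_shuffles A Y} = {vs \<in> shuffles ys zs. N \<in> shuffles xs vs}"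
  proof -
    have e: "map g ` row_shuffles B C = shuffles ys zs"
      unfolding row_shuffles_def map_shuffles mgp mgq ..
    have "\<And>Y. Y \<in> row_shuffles B C \<Longrightarrow> N \<in> row_shuffles A Y \<longleftrightarrow> N \<in> shuffles xs (map g Y)"
    proof -
      fix Y assume "Y \<in> row_shuffles B C"
      then have "pad_right A (length Y) = xs" using lenY xs_def by simp
      moreover have "pad_left ?a Y = map g Y" by (simp add: pad_left_def g_def)
      ultimately show "N \<in> row_shuffles A Y \<longleftrightarrow> N \<in> shuffles xs (map g Y)"
        unfolding row_shuffles_def by simp
    qed
    then have "map g ` {Y \<in> row_shuffles B C. N \<in> row_shuffles A Y} = {u \<in> map g ` row_shuffles B C. N \<in> shuffles xs u}"
      by (rule image_filter_set)
    then show ?thesis unfolding e .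
  qed
  have hx: "\<forall>x\<in>set xs. Ql ?a x \<and> Ql (?a + ?b) x"
  proof
    fix x assume "x \<in> set xs"
    then obtain r where r: "r \<in> set A" "x = r @ replicate (?b + ?c) 0" by (auto simp: xs_def set_pad_right)
    have lr: "length r = ?a" "nzr r" using packedD(1,3)[OF A r(1)] by auto
    have "take ?a x = r" using r lr by simp
    moreover have "take (?a + ?b) x = r @ replicate ?b 0" using r lr by (simp add: replicate_add)
    ultimately show "Ql ?a x \<and> Ql (?a + ?b) x" using lr by (simp add: Ql_def)
  qed
  have hy: "\<forall>y\<in>set ys. \<not> Ql ?a y \<and> Ql (?a + ?b) y"
  proof
    fix y assume "y \<in> set ys"
    then obtain r where r: "r \<in> set B" "y = replicate ?a 0 @ r @ replicate ?c 0" by (auto simp: ys_def)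
    have lr: "length r = ?b" "nzr r" using packedD(1,3)[OF B r(1)] by auto
    have "take ?a y = replicate ?a 0" using r by simp
    moreover have "take (?a + ?b) y = replicate ?a 0 @ r" using r lr by simp
    ultimately show "\<not> Ql ?a y \<and> Ql (?a + ?b) y" using lr by (simp add: Ql_def)
  qed
  have hz: "\<forall>z\<in>set zs. \<not> Ql ?a z \<and> \<not> Ql (?a + ?b) z"
  proof
    fix z assume "z \<in> set zs"
    then obtain r where r: "z = replicate (?a + ?b) 0 @ r" by (auto simp: zs_def set_pad_left)
    have "take ?a z = replicate ?a 0" using r by (simp add: replicate_add)
    moreover have "take (?a + ?b) z = replicate (?a + ?b) 0" using r by simp
    ultimately show "\<not> Ql ?a z \<and> \<not> Ql (?a + ?b) z" by (simp add: Ql_def)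
  qed
  have "card {X \<in> row_shuffles A B. N \<in> row_shuffles X C} = card {us \<in> shuffles xs ys. N \<in> shuffles us zs}"
    using card_map_image[OF injf, of "{X \<in> row_shuffles A B. N \<in> row_shuffles X C}"] unfolding S1 by simp
  also have "\<dots> = card {vs \<in> shuffles ys zs. N \<in> shuffles xs vs}"
    unfolding assoc_set1[OF hx hy hz] assoc_set2[OF hx hy hz] by simp
  also have "\<dots> = card {Y \<in> row_shuffles B C. N \<in> row_shuffles A Y}"
    using card_map_image[OF injg, of "{Y \<in> row_shuffles B C. N \<in> row_shuffles A Y}"] unfolding S2 by simp
  finally show ?thesis .
qed

definition K :: "mat \<Rightarrow> mat \<Rightarrow> mat \<Rightarrow> 'a::field" where
  "K A B N = (if N \<in> row_shuffles A B then 1 else 0)"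

abbreviation fs :: "(mat \<Rightarrow> 'a::field) \<Rightarrow> bool" where "fs x \<equiv> finite (supp x)"

lemma supp_iff: "M \<in> supp x \<longleftrightarrow> x M \<noteq> 0" by (simp add: supp_def)

lemma sum_super:
  assumes "finite S" "supp a \<subseteq> S"
  shows "(\<Sum>A\<in>supp a. a A * F A) = (\<Sum>A\<in>S. (a :: mat \<Rightarrow> 'a::field) A * F A)"
  by (rule sum.mono_neutral_left) (use assms in \<open>auto simp: supp_def\<close>)

lemma dprod_formula:
  "dprod a b N = (\<Sum>A\<in>supp a. \<Sum>B\<in>supp b. a A * b B * K A B N)"
proof -
  have e: "{p. a (fst p) \<noteq> 0 \<and> b (snd p) \<noteq> 0} = supp a \<times> supp b" by (auto simp: supp_def)
  show ?thesis unfolding dprod_def e by (simp add: sum.cartesian_product K_def case_prod_beta)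
qed

lemma dprod_super:
  assumes "finite S" "supp a \<subseteq> S" "finite T" "supp b \<subseteq> T"
  shows "dprod a b N = (\<Sum>A\<in>S. \<Sum>B\<in>T. a A * b B * K A B N)"
proof -
  have "dprod a b N = (\<Sum>A\<in>supp a. a A * (\<Sum>B\<in>supp b. b B * K A B N))"
    unfolding dprod_formula by (simp add: sum_distrib_left mult.assoc)
  also have "\<dots> = (\<Sum>A\<in>S. a A * (\<Sum>B\<in>T. b B * K A B N))"
    using sum_super[OF assms(3,4)] sum_super[OF assms(1,2)] by simp
  finally show ?thesis by (simp add: sum_distrib_left mult.assoc)
qed

lemma basis_apply: "basis_elt A N = (if N = A then 1 else 0)" by (simp add: basis_elt_def)
lemma supp_basis[simp]: "supp (basis_elt A :: mat \<Rightarrow> 'a::field) = {A}" by (auto simp: supp_def basis_elt_def)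

lemma dprod_basis_left: "dprod (basis_elt A) y N = (\<Sum>B\<in>supp y. y B * K A B N)"
  unfolding dprod_formula supp_basis by (simp add: basis_apply)
lemma dprod_basis_right: "dprod x (basis_elt B) N = (\<Sum>A\<in>supp x. x A * K A B N)"
  unfolding dprod_formula supp_basis by (simp add: basis_apply)
lemma dprod_basis_basis: "dprod (basis_elt A) (basis_elt B) N = K A B N"
  unfolding dprod_formula supp_basis by (simp add: basis_apply)

lemma sum_nonzeroE: "sum g S \<noteq> 0 \<Longrightarrow> (\<And>x. x \<in> S \<Longrightarrow> g x \<noteq> 0 \<Longrightarrow> P) \<Longrightarrow> P"
  by (meson sum.neutral)

lemma supp_dprod: "supp (dprod a b) \<subseteq> (\<Union>A\<in>supp a. \<Union>B\<in>supp b. row_shuffles A B)"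
proof
  fix N assume "N \<in> supp (dprod a b)"
  then have "dprod a b N \<noteq> 0" by (simp add: supp_def)
  then obtain A where A: "A \<in> supp a" "(\<Sum>B\<in>supp b. a A * b B * K A B N) \<noteq> 0"
    unfolding dprod_formula by (rule sum_nonzeroE)
  obtain B where "B \<in> supp b" "a A * b B * K A B N \<noteq> 0"
    using A(2) by (rule sum_nonzeroE)
  then have "A \<in> supp a" "B \<in> supp b" "K A B N \<noteq> (0::'a)" using A by auto
  then show "N \<in> (\<Union>A\<in>supp a. \<Union>B\<in>supp b. row_shuffles A B)" by (auto simp: K_def split: if_splits)
qed

lemma fs_dprod: "fs a \<Longrightarrow> fs b \<Longrightarrow> fs (dprod a b)"
  by (rule finite_subset[OF supp_dprod]) auto

lemma supp_dprod_PS: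
  assumes "supp a \<subseteq> PS k m" "supp b \<subseteq> PS k n"
  shows "supp (dprod a b) \<subseteq> PS k (m + n)"
  using supp_dprod[of a b] assms rs_PS by (fastforce simp: PS_def)

lemma pairing_super:
  assumes "finite S" "supp v \<subseteq> S"
  shows "pairing w v = (\<Sum>N\<in>S. w N * v N)"
  unfolding pairing_def
  by (rule sum.mono_neutral_left) (use assms in \<open>auto simp: supp_def\<close>)

lemma pairing_supp: "pairing w v = (\<Sum>N\<in>supp v. w N * v N)"
  by (simp add: pairing_def supp_def)

lemma BIL:
  assumes "fs a" "fs b"
  shows "pairing (dprod a b) x = (\<Sum>A\<in>supp a. \<Sum>B\<in>supp b. a A * b B * pairing (K A B) x)"
proof -
  have "pairing (dprod a b) x = (\<Sum>N\<in>supp x. \<Sum>A\<in>supp a. \<Sum>B\<in>supp b. a A * b B * (K A B N * x N))"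
    unfolding pairing_supp dprod_formula by (simp add: sum_distrib_right mult.assoc)
  also have "\<dots> = (\<Sum>A\<in>supp a. \<Sum>N\<in>supp x. \<Sum>B\<in>supp b. a A * b B * (K A B N * x N))"
    by (rule sum.swap)
  also have "\<dots> = (\<Sum>A\<in>supp a. \<Sum>B\<in>supp b. \<Sum>N\<in>supp x. a A * b B * (K A B N * x N))"
    by (rule sum.cong[OF refl], rule sum.swap)
  also have "\<dots> = (\<Sum>A\<in>supp a. \<Sum>B\<in>supp b. a A * b B * pairing (K A B) x)"
    unfolding pairing_supp by (simp add: sum_distrib_left)
  finally show ?thesis .
qed

lemma sum_indicator_card:
  assumes "finite F" "S \<subseteq> F"
  shows "(\<Sum>X\<in>F. (if X \<in> S \<and> P X then 1 else 0) :: 'a::field) = of_nat (card {X \<in> S. P X})"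
proof -
  have "(\<Sum>X\<in>F. (if X \<in> S \<and> P X then 1 else 0) :: 'a) = (\<Sum>X\<in>{X\<in>F. X \<in> S \<and> P X}. 1)"
    using sum.inter_filter[OF assms(1), of "\<lambda>_. (1::'a)" "\<lambda>X. X \<in> S \<and> P X"] by simp
  also have "{X\<in>F. X \<in> S \<and> P X} = {X \<in> S. P X}" using assms(2) by auto
  finally show ?thesis by simp
qed

lemma dprod_assoc_basis:
  assumes A: "packed k A" and B: "packed k B" and y: "fs y" "\<forall>C\<in>supp y. packed k C"
  shows "dprod (dprod (basis_elt A) y) (basis_elt B) = dprod (basis_elt A) (dprod y (basis_elt B))"
proof
  fix N
  define F where "F = (\<Union>C\<in>supp y. row_shuffles A C)"
  define G where "G = (\<Union>C\<in>supp y. row_shuffles C B)"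
  have fF: "finite F" "finite G" using y by (auto simp: F_def G_def)
  have sF: "supp (dprod (basis_elt A) y) \<subseteq> F" using supp_dprod[of "basis_elt A" y] by (simp add: F_def)
  have sG: "supp (dprod y (basis_elt B)) \<subseteq> G" using supp_dprod[of y "basis_elt B"] by (simp add: G_def)
  have "dprod (dprod (basis_elt A) y) (basis_elt B) N = (\<Sum>X\<in>F. dprod (basis_elt A) y X * K X B N)"
    unfolding dprod_basis_right by (rule sum_super[OF fF(1) sF])
  also have "\<dots> = (\<Sum>X\<in>F. \<Sum>C\<in>supp y. y C * (K A C X * K X B N))"
    unfolding dprod_basis_left by (simp add: sum_distrib_right mult.assoc)
  also have "\<dots> = (\<Sum>C\<in>supp y. y C * (\<Sum>X\<in>F. K A C X * K X B N))"
    by (subst sum.swap) (simp add: sum_distrib_left)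
  also have "\<dots> = (\<Sum>C\<in>supp y. y C * of_nat (card {X \<in> row_shuffles A C. N \<in> row_shuffles X B}))"
  proof (rule sum.cong[OF refl])
    fix C assume C: "C \<in> supp y"
    have "(\<Sum>X\<in>F. K A C X * K X B N) = (\<Sum>X\<in>F. (if X \<in> row_shuffles A C \<and> N \<in> row_shuffles X B then 1 else 0 :: 'a))"
      by (rule sum.cong) (auto simp: K_def)
    also have "\<dots> = of_nat (card {X \<in> row_shuffles A C. N \<in> row_shuffles X B})"
      by (rule sum_indicator_card[OF fF(1)]) (use C in \<open>auto simp: F_def\<close>)
    finally show "y C * (\<Sum>X\<in>F. K A C X * K X B N) = y C * of_nat (card {X \<in> row_shuffles A C. N \<in> row_shuffles X B})"
      by simp
  qed
  also have "\<dots> = (\<Sum>C\<in>supp y. y C * of_nat (card {Z \<in> row_shuffles C B. N \<in> row_shuffles A Z}))"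
    using rs_assoc_count[OF A _ B] y(2) by simp
  also have "\<dots> = (\<Sum>C\<in>supp y. y C * (\<Sum>Z\<in>G. K C B Z * K A Z N))"
  proof (rule sum.cong[OF refl])
    fix C assume C: "C \<in> supp y"
    have "(\<Sum>Z\<in>G. K C B Z * K A Z N) = (\<Sum>Z\<in>G. (if Z \<in> row_shuffles C B \<and> N \<in> row_shuffles A Z then 1 else 0 :: 'a))"
      by (rule sum.cong) (auto simp: K_def)
    also have "\<dots> = of_nat (card {Z \<in> row_shuffles C B. N \<in> row_shuffles A Z})"
      by (rule sum_indicator_card[OF fF(2)]) (use C in \<open>auto simp: G_def\<close>)
    finally show "y C * of_nat (card {Z \<in> row_shuffles C B. N \<in> row_shuffles A Z}) = y C * (\<Sum>Z\<in>G. K C B Z * K A Z N)"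
      by simp
  qed
  also have "\<dots> = (\<Sum>Z\<in>G. \<Sum>C\<in>supp y. y C * (K C B Z * K A Z N))"
    by (subst sum.swap) (simp add: sum_distrib_left)
  also have "\<dots> = (\<Sum>Z\<in>G. dprod y (basis_elt B) Z * K A Z N)"
    unfolding dprod_basis_right by (simp add: sum_distrib_right mult.assoc)
  also have "\<dots> = dprod (basis_elt A) (dprod y (basis_elt B)) N"
    unfolding dprod_basis_left by (rule sum_super[OF fF(2) sG, symmetric])
  finally show "dprod (dprod (basis_elt A) y) (basis_elt B) N = dprod (basis_elt A) (dprod y (basis_elt B)) N" .
qed

definition Y :: "mat list \<Rightarrow> mat \<Rightarrow> 'a::field" where
  "Y Ms = foldr dprod (map basis_elt Ms) unit_elt"

lemma Y_Nil: "Y [] = basis_elt []" by (simp add: Y_def unit_elt_def)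
lemma Y_Cons: "Y (A # Ms) = dprod (basis_elt A) (Y Ms)" by (simp add: Y_def)

lemma rows_less:
  assumes A: "packed k A"
  shows "\<forall>x\<in>set (pad_right A m). \<forall>y\<in>set (pad_left (length A) B). y < x"
proof (intro ballI)
  fix x y assume x: "x \<in> set (pad_right A m)" and y: "y \<in> set (pad_left (length A) B)"
  obtain u where u: "u \<in> set A" "x = u @ replicate m 0" using x by (auto simp: set_pad_right)
  obtain w where w: "y = replicate (length A) 0 @ w" using y by (auto simp: set_pad_left)
  have "length u = length A" "nzr u" using packedD(1,3)[OF A u(1)] by auto
  then show "y < x" using zeros_less_row[of u w "replicate m 0"] u w by (simp add: nzr_def)
qed

lemma TRIY:
  "\<forall>X\<in>set Ms. packed k X \<Longrightarrow>
    fs (Y Ms :: mat \<Rightarrow> 'a::field) \<and>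
    supp (Y Ms :: mat \<Rightarrow> 'a) \<subseteq> {N \<in> PS k (length (foldr ov Ms [])). N \<le> foldr ov Ms []} \<and>
    (Y Ms :: mat \<Rightarrow> 'a) (foldr ov Ms []) = 1"
proof (induction Ms)
  case Nil
  have "(basis_elt [] :: mat \<Rightarrow> 'a) [] = 1" by (simp add: basis_elt_def)
  then show ?case by (simp add: Y_Nil PS_def)
next
  case (Cons A Ms)
  let ?y = "Y Ms :: mat \<Rightarrow> 'a" and ?R = "foldr ov Ms []"
  have pA: "packed k A" and IH: "fs ?y" "supp ?y \<subseteq> {N \<in> PS k (length ?R). N \<le> ?R}" "?y ?R = 1"
    using Cons by auto
  have pR: "packed k ?R" using Cons.prems packed_foldr[of Ms k] by auto
  have f: "fs (Y (A # Ms) :: mat \<Rightarrow> 'a)" unfolding Y_Cons by (rule fs_dprod) (use IH in auto)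
  have s: "supp (Y (A # Ms) :: mat \<Rightarrow> 'a) \<subseteq> {N \<in> PS k (length (foldr ov (A # Ms) [])). N \<le> foldr ov (A # Ms) []}"
  proof
    fix N assume "N \<in> supp (Y (A # Ms) :: mat \<Rightarrow> 'a)"
    then have "(\<Sum>B\<in>supp ?y. ?y B * K A B N) \<noteq> 0" by (simp add: supp_def Y_Cons dprod_basis_left)
    then obtain B where B: "B \<in> supp ?y" "?y B * K A B N \<noteq> 0" by (rule sum_nonzeroE)
    then have NB: "N \<in> row_shuffles A B" by (auto simp: K_def split: if_splits)
    have B2: "B \<in> PS k (length ?R)" "B \<le> ?R" using B(1) IH(2) by auto
    then have pB: "packed k B" "length B = length ?R" by (auto simp: PS_def)
    have "N \<in> PS k (length A + length B)" using rs_PS[OF pA pB(1) NB] .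
    moreover have "N \<le> pad_right A (length B) @ pad_left (length A) B"
      using shuffle_le_append[OF rows_less[OF pA]] NB by (simp add: row_shuffles_def)
    moreover have "pad_left (length A) B \<le> pad_left (length A) ?R"
      unfolding pad_left_def by (rule map_le_mono[OF prepend_less_mono B2(2)])
    ultimately show "N \<in> {N \<in> PS k (length (foldr ov (A # Ms) [])). N \<le> foldr ov (A # Ms) []}"
      using pB append_le_mono[of "pad_left (length A) B" "pad_left (length A) ?R" "pad_right A (length ?R)"]
      by (auto simp: ov_def)
  qed
  have "(Y (A # Ms) :: mat \<Rightarrow> 'a) (ov A ?R) = (\<Sum>B\<in>supp ?y. if B = ?R then ?y B else 0)"
    unfolding Y_Cons dprod_basis_left by (rule sum.cong) (auto simp: K_def ov_rs_iff[OF pA])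
  also have "\<dots> = 1" using IH(1,3) sum.delta[OF IH(1), of ?R ?y] by (simp add: supp_def)
  finally show ?case using f s by simp
qed

lemma W_Y: "W k M = Y (factors k M)" by (simp add: W_def Y_def)

lemma W_tri:
  assumes "packed k M"
  shows "fs (W k M :: mat \<Rightarrow> 'a::field)" "supp (W k M :: mat \<Rightarrow> 'a) \<subseteq> {N \<in> PS k (length M). N \<le> M}"
    "(W k M :: mat \<Rightarrow> 'a) M = 1"
proof -
  have "\<forall>X\<in>set (factors k M). packed k X" using factors_props(1)[OF assms] connected_packed by blast
  from TRIY[OF this] factors_props(2)[OF assms]
  show "fs (W k M :: mat \<Rightarrow> 'a::field)" "supp (W k M :: mat \<Rightarrow> 'a) \<subseteq> {N \<in> PS k (length M). N \<le> M}"
    "(W k M :: mat \<Rightarrow> 'a) M = 1" unfolding W_Y by auto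
qed

lemma W_zero: "packed k M \<Longrightarrow> \<not> (N \<in> PS k (length M) \<and> N \<le> M) \<Longrightarrow> (W k M :: mat \<Rightarrow> 'a::field) N = 0"
  using W_tri(2)[of k M] by (auto simp: supp_def)

lemma W_Nil: "W k [] = unit_elt"
  by (simp add: W_def factors_Nil)

lemma W_ov: "connected k A \<Longrightarrow> packed k N \<Longrightarrow> W k (ov A N) = dprod (basis_elt A) (W k N)"
  by (simp add: W_Y factors_ov Y_Cons)

lemma W_connected: "connected k A \<Longrightarrow> W k A = basis_elt A"
proof -
  assume "connected k A"
  then have "W k A = dprod (basis_elt A) (basis_elt [])" by (simp add: W_Y factors_connected Y_Cons Y_Nil)
  also have "\<dots> = basis_elt A" by (rule ext) (simp add: dprod_basis_basis K_def basis_apply)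
  finally show ?thesis .
qed

lemma PMk_iff: "x \<in> PMk k \<longleftrightarrow> fs x \<and> (\<forall>M\<in>supp x. packed k M)"
  by (auto simp: PMk_def supp_def)

lemma pairing_lin:
  assumes "finite I" "\<And>i. i \<in> I \<Longrightarrow> fs (f i)"
  shows "pairing w (\<lambda>N. \<Sum>i\<in>I. c i * f i N) = (\<Sum>i\<in>I. c i * pairing w (f i))"
proof -
  let ?S = "\<Union>i\<in>I. supp (f i)"
  have fS: "finite ?S" using assms by auto
  have s: "supp (\<lambda>N. \<Sum>i\<in>I. c i * f i N) \<subseteq> ?S"
  proof
    fix N assume "N \<in> supp (\<lambda>N. \<Sum>i\<in>I. c i * f i N)"
    then have "(\<Sum>i\<in>I. c i * f i N) \<noteq> 0" by (simp add: supp_def)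
    then obtain i where "i \<in> I" "c i * f i N \<noteq> 0" by (rule sum_nonzeroE)
    then show "N \<in> ?S" by (auto simp: supp_def)
  qed
  have "pairing w (\<lambda>N. \<Sum>i\<in>I. c i * f i N) = (\<Sum>N\<in>?S. w N * (\<Sum>i\<in>I. c i * f i N))"
    by (rule pairing_super[OF fS s])
  also have "\<dots> = (\<Sum>i\<in>I. c i * (\<Sum>N\<in>?S. w N * f i N))"
    by (simp add: sum_distrib_left sum_distrib_right mult.assoc mult.left_commute) (rule sum.swap)
  also have "\<dots> = (\<Sum>i\<in>I. c i * pairing w (f i))"
    by (rule sum.cong[OF refl]) (use assms in \<open>auto intro!: pairing_super[symmetric] fS\<close>)
  finally show ?thesis .
qed

lemma pairing_diff:
  assumes "fs v1" "fs v2"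
  shows "pairing w (\<lambda>N. v1 N - v2 N) = pairing w v1 - pairing w v2"
proof -
  let ?S = "supp v1 \<union> supp v2"
  have "pairing w (\<lambda>N. v1 N - v2 N) = (\<Sum>N\<in>?S. w N * (v1 N - v2 N))"
    by (rule pairing_super) (use assms in \<open>auto simp: supp_def\<close>)
  also have "\<dots> = (\<Sum>N\<in>?S. w N * v1 N) - (\<Sum>N\<in>?S. w N * v2 N)"
    by (simp add: right_diff_distrib sum_subtractf)
  also have "\<dots> = pairing w v1 - pairing w v2"
    using pairing_super[of ?S v1 w] pairing_super[of ?S v2 w] assms by auto
  finally show ?thesis .
qed

lemma uniqueness:
  assumes v: "v \<in> PMk k" and h: "\<forall>M'. packed k M' \<longrightarrow> pairing (W k M') v = (0::'a::field)"
  shows "v = (\<lambda>_. 0)"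
proof (rule ccontr)
  assume "v \<noteq> (\<lambda>_. 0)"
  then have ne: "supp v \<noteq> {}" by (auto simp: supp_def)
  have fv: "fs v" and pv: "\<forall>M\<in>supp v. packed k M" using v by (auto simp: PMk_iff)
  define N0 where "N0 = Min (supp v)"
  have N0: "N0 \<in> supp v" "\<And>N. N \<in> supp v \<Longrightarrow> N0 \<le> N" using fv ne by (auto simp: N0_def)
  have p0: "packed k N0" using pv N0 by auto
  have "pairing (W k N0) v = (\<Sum>N\<in>supp v. W k N0 N * v N)" by (rule pairing_supp)
  also have "\<dots> = W k N0 N0 * v N0 + (\<Sum>N\<in>supp v - {N0}. W k N0 N * v N)"
    by (rule sum.remove[OF fv N0(1)])
  finally have eq1: "pairing (W k N0) v = W k N0 N0 * v N0 + (\<Sum>N\<in>supp v - {N0}. W k N0 N * v N)" .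
  have "(\<Sum>N\<in>supp v - {N0}. W k N0 N * v N) = 0"
  proof (rule sum.neutral, rule ballI)
    fix N assume "N \<in> supp v - {N0}"
    then have "N0 \<le> N" "N \<noteq> N0" using N0(2) by auto
    then have "\<not> N \<le> N0" by auto
    then have "(W k N0 :: mat \<Rightarrow> 'a) N = 0" using W_zero[OF p0, of N] by blast
    then show "W k N0 N * v N = 0" by simp
  qed
  then have "W k N0 N0 * v N0 + (\<Sum>N\<in>supp v - {N0}. W k N0 N * v N) = v N0"
    using W_tri(3)[OF p0, where 'a='a] by simp
  with eq1 have "pairing (W k N0) v = v N0" by simp
  moreover have "v N0 \<noteq> 0" using N0(1) by (simp add: supp_def)
  ultimately show False using h p0 by simp
qed

lemma sum_basis_mult:
  assumes "finite S" "b \<in> S"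
  shows "(\<Sum>N\<in>S. w N * (c * basis_elt b N)) = c * (w b :: 'a::field)"
proof -
  have "(\<Sum>N\<in>S. w N * (c * basis_elt b N)) = (\<Sum>N\<in>S. if N = b then c * w b else 0)"
    by (rule sum.cong) (auto simp: basis_elt_def)
  also have "\<dots> = c * w b" using assms by simp
  finally show ?thesis .
qed

lemma exist_dual:
  assumes M: "packed k M"
  shows "\<exists>v::mat \<Rightarrow> 'a::field. supp v \<subseteq> PS k (length M) \<and>
     (\<forall>M'. packed k M' \<longrightarrow> pairing (W k M') v = (if M' = M then 1 else 0))"
proof -
  let ?S = "PS k (length M)"
  have fS: "finite ?S" by (rule finite_PS)
  have pS: "\<And>v w. supp v \<subseteq> ?S \<Longrightarrow> pairing w v = (\<Sum>N\<in>?S. w N * v N)"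
    using pairing_super[OF fS] by blast
  have main: "T \<subseteq> ?S \<longrightarrow> (\<exists>v::mat \<Rightarrow> 'a. supp v \<subseteq> ?S \<and> (\<forall>a\<in>T. pairing (W k a) v = (if a = M then 1 else 0)))"
    if "finite T" for T
    using that
  proof (induction T rule: finite_linorder_max_induct)
    case empty
    show ?case by (intro impI exI[of _ "\<lambda>_. 0"]) (auto simp: supp_def)
  next
    case (insert b T)
    show ?case
    proof
      assume sub: "insert b T \<subseteq> ?S"
      then obtain v :: "mat \<Rightarrow> 'a" where v: "supp v \<subseteq> ?S" "\<forall>a\<in>T. pairing (W k a) v = (if a = M then 1 else 0)"
        using insert.IH by auto
      have bS: "b \<in> ?S" using sub by auto
      then have pb: "packed k b" "length b = length M" by (auto simp: PS_def)
      define c where "c = (if b = M then 1 else 0) - pairing (W k b) v"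
      define v' where "v' = (\<lambda>N. v N + c * basis_elt b N)"
      have sv': "supp v' \<subseteq> ?S" using v(1) bS by (auto simp: supp_def v'_def basis_elt_def)
      have pv': "\<And>w. pairing w v' = pairing w v + c * w b"
      proof -
        fix w :: "mat \<Rightarrow> 'a"
        have "pairing w v' = (\<Sum>N\<in>?S. w N * v' N)" by (rule pS[OF sv'])
        also have "\<dots> = (\<Sum>N\<in>?S. w N * v N) + (\<Sum>N\<in>?S. w N * (c * basis_elt b N))"
          by (simp add: v'_def distrib_left sum.distrib)
        finally have "pairing w v' = (\<Sum>N\<in>?S. w N * v N) + (\<Sum>N\<in>?S. w N * (c * basis_elt b N))" .
        then show "pairing w v' = pairing w v + c * w b"
          using sum_basis_mult[OF fS bS] pS[OF v(1)] by simp
      qed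
      have "\<forall>a\<in>insert b T. pairing (W k a) v' = (if a = M then 1 else 0)"
      proof
        fix a assume a: "a \<in> insert b T"
        show "pairing (W k a) v' = (if a = M then 1 else 0)"
        proof (cases "a = b")
          case True
          then show ?thesis using pv' W_tri(3)[OF pb(1), where 'a='a] by (simp add: c_def)
        next
          case False
          then have aT: "a \<in> T" using a by auto
          then have "a < b" using insert.hyps by auto
          moreover have pa: "packed k a" using sub aT by (auto simp: PS_def)
          ultimately have "(W k a :: mat \<Rightarrow> 'a) b = 0" using W_zero[OF pa, of b, where 'a='a] by (simp add: not_le)
          then show ?thesis using pv' v(2) aT by simp
        qed
      qed
      then show "\<exists>v::mat \<Rightarrow> 'a. supp v \<subseteq> ?S \<and> (\<forall>a\<in>insert b T. pairing (W k a) v = (if a = M then 1 else 0))"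
        using sv' by blast
    qed
  qed
  obtain v :: "mat \<Rightarrow> 'a" where v: "supp v \<subseteq> ?S" "\<forall>a\<in>?S. pairing (W k a) v = (if a = M then 1 else 0)"
    using main[OF fS] by auto
  have "\<forall>M'. packed k M' \<longrightarrow> pairing (W k M') v = (if M' = M then 1 else 0)"
  proof (intro allI impI)
    fix M' assume pM': "packed k M'"
    show "pairing (W k M') v = (if M' = M then 1 else 0)"
    proof (cases "length M' = length M")
      case True then show ?thesis using v(2) pM' by (auto simp: PS_def)
    next
      case False
      have "pairing (W k M') v = (\<Sum>N\<in>supp v. W k M' N * v N)" by (rule pairing_supp)
      also have "\<dots> = 0"
      proof (rule sum.neutral, rule ballI)
        fix N assume "N \<in> supp v"
        then have "length N = length M" using v(1) by (auto simp: PS_def)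
        then have "(W k M' :: mat \<Rightarrow> 'a) N = 0" using W_zero[OF pM', of N] False by (auto simp: PS_def)
        then show "W k M' N * v N = 0" by simp
      qed
      finally show ?thesis using False by auto
    qed
  qed
  then show ?thesis using v(1) by blast
qed

lemma V_props:
  assumes M: "packed k M"
  shows "(V k M :: mat \<Rightarrow> 'a::field) \<in> PMk k" "supp (V k M :: mat \<Rightarrow> 'a) \<subseteq> PS k (length M)"
    "\<And>M'. packed k M' \<Longrightarrow> pairing (W k M') (V k M :: mat \<Rightarrow> 'a) = (if M' = M then 1 else 0)"
proof -
  obtain v0 :: "mat \<Rightarrow> 'a" where v0: "supp v0 \<subseteq> PS k (length M)"
    "\<forall>M'. packed k M' \<longrightarrow> pairing (W k M') v0 = (if M' = M then 1 else 0)"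
    using exist_dual[OF M] by blast
  have fv0: "fs v0" using v0(1) finite_PS finite_subset by blast
  have v0P: "v0 \<in> PMk k" using v0(1) fv0 by (auto simp: PMk_iff PS_def)
  have "V k M = v0"
    unfolding V_def
  proof (rule the_equality)
    show "v0 \<in> PMk k \<and> (\<forall>M'. packed k M' \<longrightarrow> pairing (W k M') v0 = (if M' = M then 1 else 0))"
      using v0P v0(2) by blast
  next
    fix v :: "mat \<Rightarrow> 'a"
    assume h: "v \<in> PMk k \<and> (\<forall>M'. packed k M' \<longrightarrow> pairing (W k M') v = (if M' = M then 1 else 0))"
    have fv: "fs v" using h by (simp add: PMk_iff)
    have dP: "(\<lambda>N. v N - v0 N) \<in> PMk k"
    proof -
      have "supp (\<lambda>N. v N - v0 N) \<subseteq> supp v \<union> supp v0" by (auto simp: supp_def)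
      then show ?thesis using fv fv0 h v0P unfolding PMk_iff by (auto intro: finite_subset)
    qed
    have "\<forall>M'. packed k M' \<longrightarrow> pairing (W k M') (\<lambda>N. v N - v0 N) = 0"
      using pairing_diff[OF fv fv0] h v0(2) by simp
    then have "(\<lambda>N. v N - v0 N) = (\<lambda>_. 0)" using uniqueness[OF dP] by blast
    then show "v = v0" by (metis (no_types, lifting) ext eq_iff_diff_eq_0)
  qed
  then show "(V k M :: mat \<Rightarrow> 'a::field) \<in> PMk k" "supp (V k M :: mat \<Rightarrow> 'a) \<subseteq> PS k (length M)"
    "\<And>M'. packed k M' \<Longrightarrow> pairing (W k M') (V k M :: mat \<Rightarrow> 'a) = (if M' = M then 1 else 0)"
    using v0P v0(1) v0(2) by auto
qed

definition E :: "nat \<Rightarrow> (mat \<Rightarrow> 'a::field) \<Rightarrow> mat set" where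
  "E k x = (\<Union>N\<in>supp x. PS k (length N))"

lemma finite_E: "fs x \<Longrightarrow> finite (E k x)"
  by (auto simp: E_def finite_PS)

lemma expansion:
  assumes x: "x \<in> PMk k"
  shows "x = (\<lambda>N. \<Sum>M\<in>E k x. pairing (W k M) x * V k M N)"
proof -
  let ?e = "\<lambda>N. \<Sum>M\<in>E k x. pairing (W k M) x * V k M N"
  have fx: "fs x" and px: "\<forall>M\<in>supp x. packed k M" using x by (auto simp: PMk_iff)
  have fE: "finite (E k x)" using finite_E[OF fx] .
  have pE: "\<And>M. M \<in> E k x \<Longrightarrow> packed k M" by (auto simp: E_def PS_def)
  have fV: "\<And>M. M \<in> E k x \<Longrightarrow> fs (V k M :: mat \<Rightarrow> 'a)" using V_props(1) pE by (auto simp: PMk_iff)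
  have se: "supp ?e \<subseteq> (\<Union>M\<in>E k x. supp (V k M :: mat \<Rightarrow> 'a))"
  proof
    fix N assume "N \<in> supp ?e"
    then have "(\<Sum>M\<in>E k x. pairing (W k M) x * V k M N) \<noteq> (0::'a)" by (simp add: supp_def)
    then obtain M where "M \<in> E k x" "pairing (W k M) x * V k M N \<noteq> (0::'a)" by (rule sum_nonzeroE)
    then show "N \<in> (\<Union>M\<in>E k x. supp (V k M :: mat \<Rightarrow> 'a))" by (auto simp: supp_def)
  qed
  have feP: "?e \<in> PMk k"
    unfolding PMk_iff
  proof
    show "fs ?e" using se fE fV by (auto intro: finite_subset)
    show "\<forall>M\<in>supp ?e. packed k M"
      using se V_props(2) pE by (fastforce simp: PS_def)
  qed
  have fe: "fs ?e" using feP by (simp add: PMk_iff)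
  have dP: "(\<lambda>N. x N - ?e N) \<in> PMk k"
  proof -
    have "supp (\<lambda>N. x N - ?e N) \<subseteq> supp x \<union> supp ?e" by (auto simp: supp_def)
    then show ?thesis using fx fe px feP unfolding PMk_iff by (auto intro: finite_subset)
  qed
  have "\<forall>M'. packed k M' \<longrightarrow> pairing (W k M') (\<lambda>N. x N - ?e N) = 0"
  proof (intro allI impI)
    fix M' assume pM': "packed k M'"
    have "pairing (W k M') ?e = (\<Sum>M\<in>E k x. pairing (W k M) x * pairing (W k M') (V k M))"
      by (rule pairing_lin[OF fE fV])
    also have "\<dots> = (\<Sum>M\<in>E k x. if M = M' then pairing (W k M) x else 0)"
    proof (rule sum.cong[OF refl])
      fix M assume "M \<in> E k x"
      then have "pairing (W k M') (V k M :: mat \<Rightarrow> 'a) = (if M' = M then 1 else 0)"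
        using V_props(3)[OF pE pM'] by blast
      then show "pairing (W k M) x * pairing (W k M') (V k M :: mat \<Rightarrow> 'a) = (if M = M' then pairing (W k M) x else 0)"
        by auto
    qed
    also have "\<dots> = (if M' \<in> E k x then pairing (W k M') x else 0)"
      using fE by (simp add: sum.delta')
    also have "\<dots> = pairing (W k M') x"
    proof (cases "M' \<in> E k x")
      case False
      have "pairing (W k M') x = (\<Sum>N\<in>supp x. W k M' N * x N)" by (rule pairing_supp)
      also have "\<dots> = 0"
      proof (rule sum.neutral, rule ballI)
        fix N assume N: "N \<in> supp x"
        have "(W k M' :: mat \<Rightarrow> 'a) N = 0"
        proof (rule W_zero[OF pM'], rule notI)
          assume "N \<in> PS k (length M') \<and> N \<le> M'"
          then have "M' \<in> PS k (length N)" using pM' by (auto simp: PS_def)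
          then show False using False N by (auto simp: E_def)
        qed
        then show "W k M' N * x N = 0" by simp
      qed
      finally show ?thesis using False by simp
    qed simp
    finally show "pairing (W k M') (\<lambda>N. x N - ?e N) = 0"
      using pairing_diff[OF fx fe] by simp
  qed
  then have "(\<lambda>N. x N - ?e N) = (\<lambda>_. 0)" using uniqueness[OF dP] by blast
  then show ?thesis by (metis (no_types, lifting) ext eq_iff_diff_eq_0)
qed

lemma Ql_fun: "Ql n = (\<lambda>r. nzr (take n r))" by (rule ext) (simp add: Ql_def)

lemma cp_full:
  assumes len: "\<forall>r\<in>set X. length r = m" and col: "\<forall>i<m. \<exists>r\<in>set X. r!i \<noteq> 0"
  shows "cp X = filter nzr X"
proof -
  let ?S = "{j. \<exists>r'\<in>set X. j < length r' \<and> r' ! j \<noteq> 0}"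
  have "\<And>r. r \<in> set X \<Longrightarrow> nths r ?S = r"
  proof -
    fix r assume r: "r \<in> set X"
    show "nths r ?S = r"
    proof (rule nths_all, intro allI impI)
      fix i assume "i < length r"
      then have "i < m" using len r by auto
      then obtain r' where "r' \<in> set X" "r'!i \<noteq> 0" using col by blast
      then show "i \<in> ?S" using len \<open>i < m\<close> by auto
    qed
  qed
  then have "map (\<lambda>r. nths r ?S) (filter nzr X) = filter nzr X" by (auto intro: map_idI)
  moreover have "filter (\<lambda>r. \<exists>x\<in>set r. x \<noteq> 0) X = filter nzr X" by (rule filter_cong) (auto simp: nzr_def)
  ultimately show ?thesis unfolding cp_def by simp
qed

lemma cp_left:
  assumes P: "packed k P" and j: "j \<le> length P"
  shows "cp (map (take j) P) = filter nzr (map (take j) P)"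
proof (rule cp_full[where m = j])
  show "\<forall>r\<in>set (map (take j) P). length r = j" using packedD(1)[OF P] j by auto
  show "\<forall>i<j. \<exists>r\<in>set (map (take j) P). r ! i \<noteq> 0"
  proof (intro allI impI)
    fix i assume i: "i < j"
    then obtain r where "r \<in> set P" "r!i \<noteq> 0" using packedD(4)[OF P] j by (meson less_le_trans)
    then show "\<exists>r\<in>set (map (take j) P). r ! i \<noteq> 0" using i by (intro bexI[of _ "take j r"]) auto
  qed
qed

lemma cp_right:
  assumes P: "packed k P" and j: "j \<le> length P"
  shows "cp (map (drop j) P) = filter nzr (map (drop j) P)"
proof (rule cp_full[where m = "length P - j"])
  show "\<forall>r\<in>set (map (drop j) P). length r = length P - j" using packedD(1)[OF P] j by auto
  show "\<forall>i<length P - j. \<exists>r\<in>set (map (drop j) P). r ! i \<noteq> 0"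
  proof (intro allI impI)
    fix i assume i: "i < length P - j"
    have "j + i < length P" using i by simp
    then obtain r where r: "r \<in> set P" "r!(j+i) \<noteq> 0" using packedD(4)[OF P, of "j+i"] by blast
    have "length r = length P" using packedD(1)[OF P r(1)] .
    then have "drop j r ! i = r!(j+i)" using i j by simp
    then show "\<exists>r\<in>set (map (drop j) P). r ! i \<noteq> 0" using r by (intro bexI[of _ "drop j r"]) auto
  qed
qed

lemma length_filter_or_and:
  "length (filter p xs) + length (filter q xs) = length (filter (\<lambda>x. p x \<or> q x) xs) + length (filter (\<lambda>x. p x \<and> q x) xs)"
  by (induction xs) auto

lemma split_forward:
  assumes P: "packed k P" and j: "j \<le> length P"
    and sqA: "is_square A" and sqB: "is_square B"
    and LA: "filter nzr (map (take j) P) = A" and RB: "filter nzr (map (drop j) P) = B"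
  shows "length A = j \<and> packed k A \<and> packed k B \<and> P \<in> row_shuffles A B"
proof -
  let ?n = "length P"
  have rl: "\<And>r. r \<in> set P \<Longrightarrow> length r = ?n" using packedD(1)[OF P] .
  have lA: "length A = j"
  proof (cases "A = []")
    case True
    show ?thesis
    proof (rule ccontr)
      assume "length A \<noteq> j"
      then have "0 < j" using True by simp
      then have "0 < length P" using j by linarith
      then obtain r where r: "r \<in> set P" "r!0 \<noteq> 0" using packedD(4)[OF P, of 0] by blast
      then have "nzr (take j r)" using \<open>0 < j\<close> rl[OF r(1)] j unfolding nzr_nth by (intro exI[of _ 0]) auto
      then have "take j r \<in> set A" using LA r(1) by auto
      then show False using True by simp
    qed
  next
    case False
    then obtain u where "u \<in> set A" by (meson list.set_sel(1))
    then have "length u = length A" using sqA by (simp add: is_square_def)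
    moreover have "length u = j" using \<open>u \<in> set A\<close> LA rl j by auto
    ultimately show ?thesis by simp
  qed
  have lB: "length B = ?n - j"
  proof (cases "B = []")
    case True
    show ?thesis
    proof (rule ccontr)
      assume "length B \<noteq> ?n - j"
      then have jn: "j < ?n" using True by simp
      then obtain r where r: "r \<in> set P" "r!j \<noteq> 0" using packedD(4)[OF P] by auto
      then have "nzr (drop j r)" using jn rl[OF r(1)] unfolding nzr_nth by (intro exI[of _ 0]) auto
      then have "drop j r \<in> set B" using RB r(1) by auto
      then show False using True by simp
    qed
  next
    case False
    then obtain u where "u \<in> set B" by (meson list.set_sel(1))
    then have "length u = length B" using sqB by (simp add: is_square_def)
    moreover have "length u = ?n - j" using \<open>u \<in> set B\<close> RB rl j by auto
    ultimately show ?thesis by simp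
  qed
  let ?p = "\<lambda>r. nzr (take j r)" and ?q = "\<lambda>r. nzr (drop j r)"
  have c1: "length (filter ?p P) = j"
  proof -
    have "filter nzr (map (take j) P) = map (take j) (filter ?p P)" by (simp add: filter_map o_def)
    then show ?thesis using LA lA by (metis length_map)
  qed
  have c2: "length (filter ?q P) = ?n - j"
  proof -
    have "filter nzr (map (drop j) P) = map (drop j) (filter ?q P)" by (simp add: filter_map o_def)
    then show ?thesis using RB lB by (metis length_map)
  qed
  have "filter (\<lambda>r. ?p r \<or> ?q r) P = P"
  proof (rule filter_True, rule ballI)
    fix r assume "r \<in> set P"
    then have "nzr r" using packedD(3)[OF P] by blast
    then show "?p r \<or> ?q r" by (metis append_take_drop_id nzr_append)
  qed
  then have "length (filter (\<lambda>r. ?p r \<and> ?q r) P) = 0"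
    using length_filter_or_and[of ?p P ?q] c1 c2 j by simp
  then have e0: "filter (\<lambda>r. ?p r \<and> ?q r) P = []" by simp
  have excl: "\<And>r. r \<in> set P \<Longrightarrow> ?p r \<longleftrightarrow> \<not> ?q r"
  proof -
    fix r assume r: "r \<in> set P"
    have "\<not> (?p r \<and> ?q r)" using e0 r unfolding filter_empty_conv by blast
    moreover have "?p r \<or> ?q r" using \<open>filter (\<lambda>r. ?p r \<or> ?q r) P = P\<close> r
      by (metis (no_types, lifting) filter_id_conv)
    ultimately show "?p r \<longleftrightarrow> \<not> ?q r" by blast
  qed
  have zr: "\<And>u. \<not> nzr u \<Longrightarrow> u = replicate (length u) 0"
    by (metis nzr_nth zero_list_eq)
  have A_eq: "A = map (take j) (filter (Ql j) P)" using LA by (simp add: filter_map o_def Ql_fun)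
  have B_eq: "B = map (drop j) (filter (\<lambda>r. \<not> Ql j r) P)"
  proof -
    have "filter ?q P = filter (\<lambda>r. \<not> Ql j r) P"
      by (rule filter_eq_cong) (use excl in \<open>auto simp: Ql_def\<close>)
    then show ?thesis using RB by (simp add: filter_map o_def)
  qed
  have fl: "filter (Ql j) P = pad_right A (length B)"
  proof -
    have "pad_right A (length B) = map (\<lambda>r. take j r @ replicate (?n - j) 0) (filter (Ql j) P)"
      using A_eq lB by (simp add: pad_right_def)
    also have "\<dots> = filter (Ql j) P"
    proof (rule map_idI)
      fix r assume "r \<in> set (filter (Ql j) P)"
      then have r: "r \<in> set P" "Ql j r" by auto
      then have "\<not> nzr (drop j r)" using excl by (auto simp: Ql_def)
      then have "drop j r = replicate (?n - j) 0" using zr[of "drop j r"] rl[OF r(1)] by simp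
      then show "take j r @ replicate (?n - j) 0 = r" by (metis append_take_drop_id)
    qed
    finally show ?thesis by simp
  qed
  have fr: "filter (\<lambda>r. \<not> Ql j r) P = pad_left (length A) B"
  proof -
    have "pad_left (length A) B = map (\<lambda>r. replicate j 0 @ drop j r) (filter (\<lambda>r. \<not> Ql j r) P)"
      using B_eq lA by (simp add: pad_left_def)
    also have "\<dots> = filter (\<lambda>r. \<not> Ql j r) P"
    proof (rule map_idI)
      fix r assume "r \<in> set (filter (\<lambda>r. \<not> Ql j r) P)"
      then have r: "r \<in> set P" "\<not> Ql j r" by auto
      then have "take j r = replicate j 0" using zr[of "take j r"] rl[OF r(1)] j by (simp add: Ql_def)
      then show "replicate j 0 @ drop j r = r" by (metis append_take_drop_id)
    qed
    finally show ?thesis by simp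
  qed
  have pA: "packed k A"
  proof (rule packedI)
    fix r assume "r \<in> set A" then show "length r = length A" using sqA by (simp add: is_square_def)
  next
    fix r x assume "r \<in> set A" "x \<in> set r" then show "x \<le> k" using A_eq packedD(2)[OF P] by (auto dest: in_set_takeD)
  next
    fix r assume "r \<in> set A" then show "nzr r" using LA by auto
  next
    fix i assume i: "i < length A"
    then obtain r where r: "r \<in> set P" "r!i \<noteq> 0" using packedD(4)[OF P] lA j by (meson less_le_trans)
    then have "take j r ! i \<noteq> 0" using i lA by simp
    moreover have "nzr (take j r)" using calculation i lA rl[OF r(1)] j unfolding nzr_nth by (intro exI[of _ i]) auto
    ultimately show "\<exists>r\<in>set A. r ! i \<noteq> 0" using LA r(1) by (auto intro!: bexI[of _ "take j r"])
  qed
  have pB: "packed k B"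
  proof (rule packedI)
    fix r assume "r \<in> set B" then show "length r = length B" using sqB by (simp add: is_square_def)
  next
    fix r x assume "r \<in> set B" "x \<in> set r" then show "x \<le> k" using B_eq packedD(2)[OF P] by (auto dest: in_set_dropD)
  next
    fix r assume "r \<in> set B" then show "nzr r" using RB by auto
  next
    fix i assume i: "i < length B"
    have "j + i < ?n" using i lB by simp
    then obtain r where r: "r \<in> set P" "r!(j+i) \<noteq> 0" using packedD(4)[OF P, of "j+i"] by blast
    then have "drop j r ! i \<noteq> 0" using i lB rl[OF r(1)] by simp
    moreover have "nzr (drop j r)" using calculation i lB rl[OF r(1)] j unfolding nzr_nth by (intro exI[of _ i]) auto
    ultimately show "\<exists>r\<in>set B. r ! i \<noteq> 0" using RB r(1) by (auto intro!: bexI[of _ "drop j r"])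
  qed
  have "P \<in> row_shuffles A B" using rs_char[OF pA] fl fr lA by simp
  then show ?thesis using lA pA pB by simp
qed

lemma split_backward:
  assumes A: "packed k A" and B: "packed k B" and PR: "P \<in> row_shuffles A B"
  shows "length A \<le> length P \<and> filter nzr (map (take (length A)) P) = A \<and> filter nzr (map (drop (length A)) P) = B"
proof -
  let ?a = "length A"
  have lP: "length P = ?a + length B" using PR length_shuffles[of P] by (simp add: row_shuffles_def)
  have fl: "filter (Ql ?a) P = pad_right A (length B)" and fr: "filter (\<lambda>r. \<not> Ql ?a r) P = pad_left ?a B"
    using rs_char[OF A] PR by auto
  have sP: "set P = set (pad_right A (length B)) \<union> set (pad_left ?a B)"
    using PR set_shuffles by (auto simp: row_shuffles_def)
  have "filter nzr (map (take ?a) P) = map (take ?a) (filter (Ql ?a) P)" by (simp add: filter_map o_def Ql_fun)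
  also have "\<dots> = A" using fl packedD(1)[OF A] by (simp add: pad_right_def map_idI)
  finally have L: "filter nzr (map (take ?a) P) = A" .
  have "filter (\<lambda>r. nzr (drop ?a r)) P = filter (\<lambda>r. \<not> Ql ?a r) P"
  proof (rule filter_eq_cong)
    fix r assume "r \<in> set P"
    then consider (a) u where "u \<in> set A" "r = u @ replicate (length B) 0"
      | (b) w where "w \<in> set B" "r = replicate ?a 0 @ w"
      using sP by (auto simp: set_pad_right set_pad_left)
    then show "nzr (drop ?a r) = (\<not> Ql ?a r)"
    proof cases
      case a then show ?thesis using packedD(1,3)[OF A] by (auto simp: Ql_def)
    next
      case b then show ?thesis using packedD(3)[OF B] by (auto simp: Ql_def)
    qed
  qed
  then have "filter nzr (map (drop ?a) P) = map (drop ?a) (pad_left ?a B)"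
    using fr by (simp add: filter_map o_def)
  also have "\<dots> = B" by (simp add: pad_left_def o_def)
  finally show ?thesis using L lP by simp
qed

lemma dcoef_char:
  assumes P: "packed k P"
  shows "dcoef P A B = (if packed k A \<and> packed k B \<and> P \<in> row_shuffles A B then 1 else 0)"
proof -
  let ?J = "{j. j \<le> length P \<and>
       is_square (cp (map (take j) P)) \<and> is_square (cp (map (drop j) P)) \<and>
       cp (map (take j) P) = A \<and> cp (map (drop j) P) = B}"
  have J: "j \<in> ?J \<longleftrightarrow> j \<le> length P \<and> is_square A \<and> is_square B \<and>
       filter nzr (map (take j) P) = A \<and> filter nzr (map (drop j) P) = B" for j
    using cp_left[OF P, of j] cp_right[OF P, of j] by auto
  show ?thesis
  proof (cases "packed k A \<and> packed k B \<and> P \<in> row_shuffles A B")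
    case True
    have sq: "is_square A" "is_square B" using True by (auto simp: packed_def)
    have "?J = {length A}"
    proof (rule set_eqI, rule iffI)
      fix j assume "j \<in> ?J"
      then have "j \<le> length P" "filter nzr (map (take j) P) = A" "filter nzr (map (drop j) P) = B"
        using J by blast+
      then have "length A = j" using split_forward[OF P _ sq] by blast
      then show "j \<in> {length A}" by simp
    next
      fix j assume "j \<in> {length A}"
      then have "j = length A" by simp
      then show "j \<in> ?J" using split_backward[of k A B P] True sq J by auto
    qed
    have "dcoef P A B = card ?J" by (simp only: dcoef_def)
    also have "\<dots> = 1" unfolding \<open>?J = {length A}\<close> by simp
    finally show ?thesis using True by simp
  next
    case False
    have "?J = {}"
    proof (rule equals0I)
      fix j assume "j \<in> ?J"
      then have "j \<le> length P" "is_square A" "is_square B" "filter nzr (map (take j) P) = A" "filter nzr (map (drop j) P) = B"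
        using J by blast+
      then show False using split_forward[OF P] False by blast
    qed
    have "dcoef P A B = card ?J" by (simp only: dcoef_def)
    also have "\<dots> = 0" unfolding \<open>?J = {}\<close> by simp
    finally show ?thesis using False by simp
  qed
qed

lemma coprod_char:
  assumes x: "x \<in> PMk k"
  shows "coprod x (A, B) = (if packed k A \<and> packed k B then pairing (K A B) x else 0)"
proof -
  have px: "\<And>M. M \<in> supp x \<Longrightarrow> packed k M" using x by (auto simp: PMk_iff)
  have "coprod x (A, B) = (\<Sum>M\<in>supp x. x M * of_nat (dcoef M A B))"
    by (simp add: coprod_def supp_def)
  also have "\<dots> = (\<Sum>M\<in>supp x. if packed k A \<and> packed k B then K A B M * x M else 0)"
    by (rule sum.cong[OF refl]) (auto simp: dcoef_char[OF px] K_def)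
  also have "\<dots> = (if packed k A \<and> packed k B then pairing (K A B) x else 0)"
    by (cases "packed k A"; cases "packed k B") (simp_all add: pairing_supp)
  finally show ?thesis .
qed

lemma pairing_basis: "fs x \<Longrightarrow> pairing (basis_elt B) x = x B"
proof -
  assume f: "fs x"
  have "pairing (basis_elt B) x = (\<Sum>N\<in>supp x. if N = B then x N else 0)"
    unfolding pairing_supp by (rule sum.cong) (auto simp: basis_elt_def)
  also have "\<dots> = x B" using f by (simp add: supp_def)
  finally show ?thesis .
qed

lemma K_Nil_left: "K [] B = basis_elt B" by (rule ext) (simp add: K_def basis_elt_def)
lemma K_Nil_right: "K A [] = basis_elt A" by (rule ext) (simp add: K_def basis_elt_def)

lemma prim_iff:
  "x \<in> prim k \<longleftrightarrow> x \<in> PMk k \<and> x [] = 0 \<and>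
     (\<forall>A B. packed k A \<longrightarrow> packed k B \<longrightarrow> A \<noteq> [] \<longrightarrow> B \<noteq> [] \<longrightarrow> pairing (K A B) x = 0)"
proof
  assume p: "x \<in> prim k"
  then have x: "x \<in> PMk k" and eq: "coprod x = tens x unit_elt + tens unit_elt x" by (auto simp: prim_def)
  have fx: "fs x" using x by (simp add: PMk_iff)
  have e: "\<And>A B. coprod x (A, B) = x A * unit_elt B + unit_elt A * x B"
    using eq by (simp add: tens_def fun_eq_iff)
  have "x [] = x [] + x []"
    using e[of "[]" "[]"] coprod_char[OF x, of "[]" "[]"] pairing_basis[OF fx]
    by (simp add: K_Nil_left unit_elt_def basis_elt_def)
  then have "x [] = 0" by (metis add_cancel_left_right)
  moreover have "\<forall>A B. packed k A \<longrightarrow> packed k B \<longrightarrow> A \<noteq> [] \<longrightarrow> B \<noteq> [] \<longrightarrow> pairing (K A B) x = 0"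
  proof (intro allI impI)
    fix A B assume "packed k A" "packed k B" "A \<noteq> []" "B \<noteq> []"
    then show "pairing (K A B) x = 0" using e[of A B] coprod_char[OF x, of A B] by (simp add: unit_elt_def basis_elt_def)
  qed
  ultimately show "x \<in> PMk k \<and> x [] = 0 \<and> (\<forall>A B. packed k A \<longrightarrow> packed k B \<longrightarrow> A \<noteq> [] \<longrightarrow> B \<noteq> [] \<longrightarrow> pairing (K A B) x = 0)"
    using x by blast
next
  assume h: "x \<in> PMk k \<and> x [] = 0 \<and> (\<forall>A B. packed k A \<longrightarrow> packed k B \<longrightarrow> A \<noteq> [] \<longrightarrow> B \<noteq> [] \<longrightarrow> pairing (K A B) x = 0)"
  then have x: "x \<in> PMk k" and x0: "x [] = 0" and hK: "\<And>A B. packed k A \<Longrightarrow> packed k B \<Longrightarrow> A \<noteq> [] \<Longrightarrow> B \<noteq> [] \<Longrightarrow> pairing (K A B) x = 0"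
    by auto
  have fx: "fs x" using x by (simp add: PMk_iff)
  have px: "\<And>M. x M \<noteq> 0 \<Longrightarrow> packed k M" using x by (auto simp: PMk_iff supp_def)
  have "coprod x = tens x unit_elt + tens unit_elt x"
  proof (rule ext, clarify)
    fix A B
    show "coprod x (A, B) = (tens x unit_elt + tens unit_elt x) (A, B)"
    proof (cases "packed k A \<and> packed k B")
      case False
      then have "x A * unit_elt B + unit_elt A * x B = 0"
        using px by (auto simp: unit_elt_def basis_elt_def)
      moreover have "coprod x (A, B) = 0" using False coprod_char[OF x, of A B] by presburger
      ultimately show ?thesis by (simp add: tens_def)
    next
      case True
      show ?thesis
      proof (cases "A = []")
        case A: True
        then show ?thesis using True coprod_char[OF x] pairing_basis[OF fx, of B] x0
          by (simp add: tens_def K_Nil_left unit_elt_def basis_elt_def)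
      next
        case A: False
        show ?thesis
        proof (cases "B = []")
          case B: True
          then show ?thesis using True coprod_char[OF x] pairing_basis[OF fx, of A] A
            by (simp add: tens_def K_Nil_right unit_elt_def basis_elt_def)
        next
          case B: False
          then show ?thesis using True coprod_char[OF x] hK[of A B] A
            by (simp add: tens_def unit_elt_def basis_elt_def)
        qed
      qed
    qed
  qed
  then show "x \<in> prim k" using x by (simp add: prim_def)
qed

lemma factors_Cons:
  assumes "packed k M" "M \<noteq> []"
  obtains A1 rest where "factors k M = A1 # rest" "connected k A1" "\<forall>X\<in>set rest. connected k X"
    "M = ov A1 (foldr ov rest [])"
proof (cases "factors k M")
  case Nil then show ?thesis using factors_props(2)[OF assms(1)] assms(2) by simp
next
  case (Cons A1 rest)
  then show ?thesis using factors_props[OF assms(1)] that by auto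
qed

lemma W_split:
  assumes "packed k M" "M \<noteq> []"
  obtains A1 y where "connected k A1" "W k M = dprod (basis_elt A1) (y :: mat \<Rightarrow> 'a::field)" "fs y"
    "supp y \<subseteq> PS k (length M - length A1)"
proof -
  obtain A1 rest where f: "factors k M = A1 # rest" "connected k A1" "\<forall>X\<in>set rest. connected k X"
    "M = ov A1 (foldr ov rest [])" using factors_Cons[OF assms] by blast
  have "\<forall>X\<in>set rest. packed k X" using f(3) connected_packed by blast
  from TRIY[OF this, where 'a='a] have "fs (Y rest :: mat \<Rightarrow> 'a)" "supp (Y rest :: mat \<Rightarrow> 'a) \<subseteq> PS k (length M - length A1)"
    using f(4) by auto
  moreover have "W k M = dprod (basis_elt A1) (Y rest :: mat \<Rightarrow> 'a)" using f(1) by (simp add: W_Y Y_Cons)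
  ultimately show ?thesis using that f(2) by blast
qed

lemma pairing_dprod_basis_left:
  assumes "fs y" "fs x"
  shows "pairing (dprod (basis_elt A) y) x = (\<Sum>C\<in>supp y. y C * pairing (K A C) x)"
proof -
  have "pairing (dprod (basis_elt A) y) x = (\<Sum>A'\<in>{A}. \<Sum>B\<in>supp y. basis_elt A A' * y B * pairing (K A' B) x)"
    using BIL[of "basis_elt A" y x] assms by (simp only: supp_basis finite.emptyI finite.insertI)
  then show ?thesis by (simp add: basis_elt_def)
qed

lemma pairing_dprod_basis_right:
  assumes "fs y" "fs x"
  shows "pairing (dprod y (basis_elt B)) x = (\<Sum>C\<in>supp y. y C * pairing (K C B) x)"
proof -
  have "pairing (dprod y (basis_elt B)) x = (\<Sum>A\<in>supp y. \<Sum>B'\<in>{B}. y A * basis_elt B B' * pairing (K A B') x)"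
    using BIL[of y "basis_elt B" x] assms by (simp only: supp_basis finite.emptyI finite.insertI)
  then show ?thesis by (simp add: basis_elt_def)
qed

lemma prim_coeff_zero:
  assumes x: "x \<in> prim k" and M: "packed k M" and nc: "\<not> connected k M"
  shows "pairing (W k M) x = 0"
proof -
  have xP: "x \<in> PMk k" and x0: "x [] = 0"
    and hK: "\<And>A B. packed k A \<Longrightarrow> packed k B \<Longrightarrow> A \<noteq> [] \<Longrightarrow> B \<noteq> [] \<Longrightarrow> pairing (K A B) x = 0"
    using x unfolding prim_iff by auto
  have fx: "fs x" using xP by (simp add: PMk_iff)
  show ?thesis
  proof (cases "M = []")
    case True
    then show ?thesis using pairing_basis[OF fx] x0 by (simp add: W_Nil unit_elt_def)
  next
    case False
    obtain A1 rest where f: "factors k M = A1 # rest" "connected k A1" "\<forall>X\<in>set rest. connected k X"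
      "M = ov A1 (foldr ov rest [])" using factors_Cons[OF M False] by blast
    have "rest \<noteq> []" using f(2,4) nc by auto
    then obtain B0 rest' where "rest = B0 # rest'" by (cases rest) auto
    then have Rne: "foldr ov rest [] \<noteq> []" using f(3) foldr_ov_Cons_ne by auto
    have "\<forall>X\<in>set rest. packed k X" using f(3) connected_packed by blast
    from TRIY[OF this, where 'a='a] have y: "fs (Y rest :: mat \<Rightarrow> 'a)"
      "supp (Y rest :: mat \<Rightarrow> 'a) \<subseteq> PS k (length (foldr ov rest []))" by auto
    have "pairing (W k M) x = (\<Sum>C\<in>supp (Y rest :: mat \<Rightarrow> 'a). Y rest C * pairing (K A1 C) x)"
      using f(1) pairing_dprod_basis_left[OF y(1) fx] by (simp add: W_Y Y_Cons)
    also have "\<dots> = 0"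
    proof (rule sum.neutral, rule ballI)
      fix C assume "C \<in> supp (Y rest :: mat \<Rightarrow> 'a)"
      then have "packed k C" "C \<noteq> []" using y(2) Rne by (auto simp: PS_def)
      then show "Y rest C * pairing (K A1 C) x = 0" using hK[of A1 C] f(2) connected_packed connected_nonempty by auto
    qed
    finally show ?thesis .
  qed
qed

lemma TRI:
  assumes h: "\<forall>B\<in>PS k n. pairing g (W k B) = (0::'a::field)"
  shows "\<forall>B\<in>PS k n. g B = 0"
proof (rule ccontr)
  assume "\<not> (\<forall>B\<in>PS k n. g B = 0)"
  then have ne: "{B \<in> PS k n. g B \<noteq> 0} \<noteq> {}" by auto
  have fin: "finite {B \<in> PS k n. g B \<noteq> 0}" using finite_PS by auto
  define B0 where "B0 = Min {B \<in> PS k n. g B \<noteq> 0}"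
  have B0: "B0 \<in> PS k n" "g B0 \<noteq> 0" "\<And>B. B \<in> PS k n \<Longrightarrow> g B \<noteq> 0 \<Longrightarrow> B0 \<le> B"
    using Min_in[OF fin ne] Min_le[OF fin] by (auto simp: B0_def)
  have p0: "packed k B0" "length B0 = n" using B0(1) by (auto simp: PS_def)
  have fW: "fs (W k B0 :: mat \<Rightarrow> 'a)" using W_tri(1)[OF p0(1)] .
  have "pairing g (W k B0) = (\<Sum>N\<in>supp (W k B0 :: mat \<Rightarrow> 'a). g N * W k B0 N)" by (rule pairing_supp)
  also have "\<dots> = g B0 * W k B0 B0 + (\<Sum>N\<in>supp (W k B0 :: mat \<Rightarrow> 'a) - {B0}. g N * W k B0 N)"
    by (rule sum.remove[OF fW]) (use W_tri(3)[OF p0(1), where 'a='a] in \<open>simp add: supp_def\<close>)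
  finally have e1: "pairing g (W k B0) = g B0 * W k B0 B0 + (\<Sum>N\<in>supp (W k B0 :: mat \<Rightarrow> 'a) - {B0}. g N * W k B0 N)" .
  have "(\<Sum>N\<in>supp (W k B0 :: mat \<Rightarrow> 'a) - {B0}. g N * W k B0 N) = 0"
  proof (rule sum.neutral, rule ballI)
    fix N assume N: "N \<in> supp (W k B0 :: mat \<Rightarrow> 'a) - {B0}"
    then have "N \<in> PS k n" "N \<le> B0" "N \<noteq> B0" using W_tri(2)[OF p0(1), where 'a='a] p0(2) by auto
    then have "g N = 0" using B0(3)[of N] by force
    then show "g N * W k B0 N = 0" by simp
  qed
  then have "pairing g (W k B0) = g B0" using e1 W_tri(3)[OF p0(1), where 'a='a] by simp
  then show False using h B0(1,2) by simp
qed

lemma pairing_zero: "pairing w (\<lambda>_. 0) = 0" by (simp add: pairing_def)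

lemma pairing_add:
  assumes "fs v1" "fs v2"
  shows "pairing w (v1 + v2) = pairing w v1 + pairing w v2"
proof -
  let ?S = "supp v1 \<union> supp v2"
  have "pairing w (v1 + v2) = (\<Sum>N\<in>?S. w N * (v1 + v2) N)"
    by (rule pairing_super) (use assms in \<open>auto simp: supp_def\<close>)
  also have "\<dots> = (\<Sum>N\<in>?S. w N * (v1 N + v2 N))" by simp
  also have "\<dots> = (\<Sum>N\<in>?S. w N * v1 N) + (\<Sum>N\<in>?S. w N * v2 N)"
    by (simp add: distrib_left sum.distrib)
  also have "\<dots> = pairing w v1 + pairing w v2"
    using pairing_super[of ?S v1 w] pairing_super[of ?S v2 w] assms by auto
  finally show ?thesis .
qed

lemma pairing_scl:
  assumes "fs v"
  shows "pairing w (scl c v) = c * pairing w v"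
proof -
  have "pairing w (scl c v) = (\<Sum>N\<in>supp v. w N * scl c v N)"
    by (rule pairing_super) (use assms in \<open>auto simp: supp_def scl_def\<close>)
  also have "\<dots> = (\<Sum>N\<in>supp v. w N * (c * v N))" by (simp add: scl_def)
  also have "\<dots> = c * pairing w v" by (simp add: pairing_supp sum_distrib_left mult.left_commute)
  finally show ?thesis .
qed

lemma V_prim:
  assumes M: "connected k M"
  shows "(V k M :: mat \<Rightarrow> 'a::field) \<in> prim k"
proof -
  let ?v = "V k M :: mat \<Rightarrow> 'a"
  have pM: "packed k M" using M connected_packed by blast
  have vP: "?v \<in> PMk k" using V_props(1)[OF pM] .
  have fv: "fs ?v" using vP by (simp add: PMk_iff)
  have pv: "\<And>M'. packed k M' \<Longrightarrow> pairing (W k M') ?v = (if M' = M then 1 else 0)"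
    using V_props(3)[OF pM] by blast
  have v0: "?v [] = 0"
  proof -
    have "pairing (W k []) ?v = 0" using pv[of "[]"] connected_nonempty[OF M] by simp
    then show ?thesis using pairing_basis[OF fv] by (simp add: W_Nil unit_elt_def)
  qed
  have step1: "\<And>A B. connected k A \<Longrightarrow> packed k B \<Longrightarrow> B \<noteq> [] \<Longrightarrow> pairing (K A B) ?v = 0"
  proof -
    fix A B assume A: "connected k A" and B: "packed k B" "B \<noteq> []"
    let ?g = "\<lambda>C. pairing (K A C) ?v"
    have "\<forall>C\<in>PS k (length B). pairing ?g (W k C) = (0::'a)"
    proof
      fix C assume C: "C \<in> PS k (length B)"
      then have pC: "packed k C" "C \<noteq> []" using B by (auto simp: PS_def)
      have fW: "fs (W k C :: mat \<Rightarrow> 'a)" using W_tri(1)[OF pC(1)] .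
      have "pairing ?g (W k C) = (\<Sum>D\<in>supp (W k C :: mat \<Rightarrow> 'a). W k C D * pairing (K A D) ?v)"
        by (simp add: pairing_supp mult.commute)
      also have "\<dots> = pairing (dprod (basis_elt A) (W k C)) ?v"
        by (rule pairing_dprod_basis_left[OF fW fv, symmetric])
      also have "\<dots> = pairing (W k (ov A C)) ?v" using W_ov[OF A pC(1), where 'a='a] by simp
      also have "\<dots> = 0"
      proof -
        have pA: "packed k A" using A connected_packed by blast
        have "ov A C \<noteq> M"
        proof
          assume e: "ov A C = M"
          then have "A = M \<or> C = M" using M pA pC(1) unfolding connected_def by blast
          then show False using e pC(2) connected_nonempty[OF A]
            by (metis add_cancel_left_right add_cancel_right_left length_0_conv length_ov)
        qed
        then show ?thesis using pv[OF packed_ov[OF pA pC(1)]] by simp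
      qed
      finally show "pairing ?g (W k C) = 0" .
    qed
    then have "\<forall>C\<in>PS k (length B). ?g C = 0" by (rule TRI)
    then show "pairing (K A B) ?v = 0" using B by (auto simp: PS_def)
  qed
  have step2: "\<And>A B. packed k A \<Longrightarrow> packed k B \<Longrightarrow> A \<noteq> [] \<Longrightarrow> B \<noteq> [] \<Longrightarrow> pairing (K A B) ?v = 0"
  proof -
    fix A B assume A: "packed k A" "A \<noteq> []" and B: "packed k B" "B \<noteq> []"
    let ?g = "\<lambda>C. pairing (K C B) ?v"
    have "\<forall>C\<in>PS k (length A). pairing ?g (W k C) = (0::'a)"
    proof
      fix C assume C: "C \<in> PS k (length A)"
      then have pC: "packed k C" "C \<noteq> []" using A by (auto simp: PS_def)
      obtain A1 and y :: "mat \<Rightarrow> 'a" where s: "connected k A1" "W k C = dprod (basis_elt A1) y" "fs y"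
        "supp y \<subseteq> PS k (length C - length A1)" using W_split[OF pC] by blast
      have fW: "fs (W k C :: mat \<Rightarrow> 'a)" using W_tri(1)[OF pC(1)] .
      have py: "\<forall>D\<in>supp y. packed k D" using s(4) by (auto simp: PS_def)
      have pA1: "packed k A1" using s(1) connected_packed by blast
      define z where "z = dprod y (basis_elt B)"
      have fz: "fs z" unfolding z_def by (rule fs_dprod[OF s(3)]) simp
      have sz: "supp z \<subseteq> PS k (length C - length A1 + length B)"
        unfolding z_def by (rule supp_dprod_PS[OF s(4)]) (use B in \<open>auto simp: PS_def\<close>)
      have "pairing ?g (W k C) = (\<Sum>D\<in>supp (W k C :: mat \<Rightarrow> 'a). W k C D * pairing (K D B) ?v)"
        by (simp add: pairing_supp mult.commute)
      also have "\<dots> = pairing (dprod (W k C) (basis_elt B)) ?v"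
        by (rule pairing_dprod_basis_right[OF fW fv, symmetric])
      also have "\<dots> = pairing (dprod (basis_elt A1) z) ?v"
        unfolding z_def s(2) using dprod_assoc_basis[OF pA1 B(1) s(3) py] by simp
      also have "\<dots> = (\<Sum>D\<in>supp z. z D * pairing (K A1 D) ?v)"
        by (rule pairing_dprod_basis_left[OF fz fv])
      also have "\<dots> = 0"
      proof (rule sum.neutral, rule ballI)
        fix D assume "D \<in> supp z"
        then have "packed k D" "D \<noteq> []" using sz B by (auto simp: PS_def)
        then show "z D * pairing (K A1 D) ?v = 0" using step1[OF s(1)] by simp
      qed
      finally show "pairing ?g (W k C) = 0" .
    qed
    then have "\<forall>C\<in>PS k (length A). ?g C = 0" by (rule TRI)
    then show "pairing (K A B) ?v = 0" using A by (auto simp: PS_def)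
  qed
  show ?thesis unfolding prim_iff using vP v0 step2 by blast
qed

lemma module_scl: "module (scl :: 'a::field \<Rightarrow> (mat \<Rightarrow> 'a) \<Rightarrow> (mat \<Rightarrow> 'a))"
  by unfold_locales (auto simp: scl_def fun_eq_iff algebra_simps)

lemma sum_scl: "(\<Sum>v\<in>t. scl (u v) (f v)) = (\<lambda>N. \<Sum>v\<in>t. u v * f v N)"
  by (rule ext) (simp add: sum_fun_apply scl_def)

lemma prim_subspace: "module.subspace (scl :: 'a::field \<Rightarrow> _) (prim k)"
proof (rule module.subspaceI[OF module_scl])
  show "(0 :: mat \<Rightarrow> 'a) \<in> prim k"
    unfolding prim_iff by (auto simp: PMk_iff supp_def pairing_def)
next
  fix x y :: "mat \<Rightarrow> 'a" assume x: "x \<in> prim k" and y: "y \<in> prim k"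
  have fx: "fs x" and fy: "fs y" using x y by (auto simp: prim_iff PMk_iff)
  have "x + y \<in> PMk k"
  proof -
    have "supp (x + y) \<subseteq> supp x \<union> supp y" by (auto simp: supp_def)
    then show ?thesis using x y unfolding prim_iff PMk_iff by (auto intro: finite_subset)
  qed
  then show "x + y \<in> prim k" using x y pairing_add[OF fx fy] unfolding prim_iff by auto
next
  fix c :: 'a and x :: "mat \<Rightarrow> 'a" assume x: "x \<in> prim k"
  have fx: "fs x" using x by (auto simp: prim_iff PMk_iff)
  have "scl c x \<in> PMk k"
  proof -
    have "supp (scl c x) \<subseteq> supp x" by (auto simp: supp_def scl_def)
    then show ?thesis using x unfolding prim_iff PMk_iff by (auto intro: finite_subset)
  qed
  then show "scl c x \<in> prim k" using x pairing_scl[OF fx] unfolding prim_iff by (auto simp: scl_def)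
qed

theorem proposition2p6:
  fixes k :: nat
  assumes "k \<ge> 1"
  shows "inj_on (V k :: mat \<Rightarrow> mat \<Rightarrow> 'a::field) {M. connected k M}
       \<and> \<not> module.dependent (scl :: 'a \<Rightarrow> _) (V k ` {M. connected k M})
       \<and> module.span (scl :: 'a \<Rightarrow> _) (V k ` {M. connected k M}) = prim k"
proof (intro conjI)
  let ?C = "{M. connected k M}"
  have pC: "\<And>M. M \<in> ?C \<Longrightarrow> packed k M" using connected_packed by blast
  have pv: "\<And>M M'. M \<in> ?C \<Longrightarrow> packed k M' \<Longrightarrow> pairing (W k M') (V k M :: mat \<Rightarrow> 'a) = (if M' = M then 1 else 0)"
    using V_props(3) pC by blast
  show inj: "inj_on (V k :: mat \<Rightarrow> mat \<Rightarrow> 'a::field) ?C"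
  proof (rule inj_onI)
    fix M1 M2 assume M1: "M1 \<in> ?C" and M2: "M2 \<in> ?C" and e: "(V k M1 :: mat \<Rightarrow> 'a) = V k M2"
    have "pairing (W k M1) (V k M2 :: mat \<Rightarrow> 'a) = 1" using pv[OF M1 pC[OF M1]] e by simp
    then show "M1 = M2" using pv[OF M2 pC[OF M1]] by (auto split: if_splits)
  qed
  show "\<not> module.dependent (scl :: 'a \<Rightarrow> _) (V k ` ?C)"
    unfolding module.independent_explicit_module[OF module_scl]
  proof (intro allI impI)
    fix t and u :: "(mat \<Rightarrow> 'a) \<Rightarrow> 'a" and v
    assume ft: "finite t" and ts: "t \<subseteq> V k ` ?C" and s0: "(\<Sum>v\<in>t. scl (u v) v) = 0" and vt: "v \<in> t"
    obtain M0 where M0: "M0 \<in> ?C" "v = V k M0" using ts vt by auto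
    have fst: "\<And>w. w \<in> t \<Longrightarrow> fs w" using ts V_props(1) pC by (force simp: PMk_iff)
    have "pairing (W k M0) (\<lambda>N. \<Sum>w\<in>t. u w * w N) = (\<Sum>w\<in>t. u w * pairing (W k M0) w)"
      using pairing_lin[OF ft, of "\<lambda>w. w" "W k M0" u] fst by simp
    also have "\<dots> = (\<Sum>w\<in>t. if w = v then u w else 0)"
    proof (rule sum.cong[OF refl])
      fix w assume "w \<in> t"
      then obtain M' where M': "M' \<in> ?C" "w = V k M'" using ts by auto
      have "pairing (W k M0) w = (if w = v then 1 else 0)"
        using pv[OF M'(1) pC[OF M0(1)]] M' M0 inj_onD[OF inj _ M'(1) M0(1)] by auto
      then show "u w * pairing (W k M0) w = (if w = v then u w else 0)" by simp
    qed
    also have "\<dots> = u v" using ft vt by simp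
    finally have "u v = pairing (W k M0) (\<lambda>N. \<Sum>w\<in>t. u w * w N)" by simp
    also have "(\<lambda>N. \<Sum>w\<in>t. u w * w N) = (\<lambda>_. 0)" using s0 sum_scl[of u "\<lambda>w. w" t] by (simp add: zero_fun_def)
    finally show "u v = 0" by (simp add: pairing_zero)
  qed
  show "module.span (scl :: 'a \<Rightarrow> _) (V k ` ?C) = prim k"
  proof
    show "module.span (scl :: 'a \<Rightarrow> _) (V k ` ?C) \<subseteq> prim k"
      by (rule module.span_minimal[OF module_scl _ prim_subspace]) (use V_prim in blast)
  next
    show "prim k \<subseteq> module.span (scl :: 'a \<Rightarrow> _) (V k ` ?C)"
    proof
      fix x :: "mat \<Rightarrow> 'a" assume x: "x \<in> prim k"
      have xP: "x \<in> PMk k" using x by (simp add: prim_iff)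
      have fx: "fs x" using xP by (simp add: PMk_iff)
      have fE: "finite (E k x)" using finite_E[OF fx] .
      have pE: "\<And>M. M \<in> E k x \<Longrightarrow> packed k M" by (auto simp: E_def PS_def)
      have "x = (\<lambda>N. \<Sum>M\<in>E k x. pairing (W k M) x * V k M N)" by (rule expansion[OF xP])
      also have "\<dots> = (\<lambda>N. \<Sum>M\<in>E k x \<inter> ?C. pairing (W k M) x * V k M N)"
      proof (rule ext, rule sum.mono_neutral_right[OF fE])
        fix N
        show "E k x \<inter> ?C \<subseteq> E k x" by blast
        show "\<forall>M\<in>E k x - E k x \<inter> ?C. pairing (W k M) x * V k M N = 0"
          using prim_coeff_zero[OF x] pE by auto
      qed
      also have "\<dots> = (\<Sum>M\<in>E k x \<inter> ?C. scl (pairing (W k M) x) (V k M))"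
        by (rule ext) (simp add: sum_fun_apply scl_def)
      also have "\<dots> \<in> module.span scl (V k ` ?C)"
        by (rule module.span_sum[OF module_scl], rule module.span_scale[OF module_scl],
            rule module.span_base[OF module_scl]) auto
      finally show "x \<in> module.span (scl :: 'a \<Rightarrow> _) (V k ` ?C)" .
    qed
  qed
qed

end
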